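(* Let $a=(a_1,\ldots,a_n)$ be a vector of positive integers and $d$ a positive integer with $a([n])=a_1+\cdots+a_n>d$, and let $I=I_{a,d}\subseteq S=K[x_1,\ldots,x_n]$ be the ideal of Veronese type. Let $k_0$ be the least positive integer $k$ such that $k(a([n])-d)\ge n-1$. Then the following are equivalent: (1) $\mathrm{Soc}(I)$ is equi-generated; (2) $\mathrm{Soc}^*(I)$ is equi-generated; (3) for every subset $A\subseteq[n]$ with $a(A)>d$ one has $k_0(a(A)-d)\ge|A|-1$.
   Context: $K$ is a field and $\mathfrak{m}=(x_1,\ldots,x_n)$. The ideal of Veronese type $I_{a,d}$ is generated by all monomials $x_1^{u_1}\cdots x_n^{u_n}$ of degree $d$ with $u_i\le a_i$ for all $i$. For $A\subseteq[n]$, $a(A)=\sum_{i\in A}a_i$. $\mathrm{Soc}(I)=\bigoplus_{m\ge0}(I^m:\mathfrak{m})/I^m$ is a graded module over the fiber cone $\mathcal{F}(I)=\bigoplus_{m\ge0}I^m/\mathfrak{m}I^m$ with $(I^m:\mathfrak{m})/I^m$ in degree $m$. For $m\ge1$, $\mathrm{soc}(I^m)$ is the ideal generated by the monomials $w$ of degree $md-1$ with $x_iw\in I^m$ for all $i$, and $\mathrm{Soc}^*(I)=\bigoplus_{m\ge1}\mathrm{soc}(I^m)$ is a graded module over the Rees ring $R(I)=\bigoplus_{m\ge0}I^m$ with $\mathrm{soc}(I^m)$ in degree $m$. A finitely generated graded module $M$ is equi-generated if it is generated by homogeneous elements of degree $\min\{i: M_i\neq0\}$. *)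

theory Defs
  imports "HOL-Library.Poly_Mapping"
begin

text \<open>Polynomials over a field: finitely supported maps from exponent vectors (monomials,
  nat =>0 nat, variable x_(i+1) is index i) to coefficients.  The ring S = K[x_1,...,x_n]
  is the subset of polynomials only involving the indices 0,...,n-1.\<close>

type_synonym 'k mpoly = "(nat \<Rightarrow>\<^sub>0 nat) \<Rightarrow>\<^sub>0 'k"

definition polyring :: "nat \<Rightarrow> 'k::field mpoly set" where
  "polyring n = {p. \<forall>\<mu>\<in>Poly_Mapping.keys p. Poly_Mapping.keys \<mu> \<subseteq> {..<n}}"

definition monom :: "(nat \<Rightarrow>\<^sub>0 nat) \<Rightarrow> 'k::field mpoly" where
  "monom \<mu> = Poly_Mapping.single \<mu> 1"

definition var :: "nat \<Rightarrow> 'k::field mpoly" where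
  "var i = monom (Poly_Mapping.single i 1)"

definition mdeg :: "(nat \<Rightarrow>\<^sub>0 nat) \<Rightarrow> nat" where
  "mdeg \<mu> = (\<Sum>i\<in>Poly_Mapping.keys \<mu>. Poly_Mapping.lookup \<mu> i)"

definition ideal_gen :: "nat \<Rightarrow> 'k::field mpoly set \<Rightarrow> 'k mpoly set" where
  "ideal_gen n G = {(\<Sum>g\<in>F. c g * g) | F c. finite F \<and> F \<subseteq> G \<and> (\<forall>g\<in>F. c g \<in> polyring n)}"

definition ideal_prod :: "nat \<Rightarrow> 'k::field mpoly set \<Rightarrow> 'k mpoly set \<Rightarrow> 'k mpoly set" where
  "ideal_prod n I J = ideal_gen n {f * g | f g. f \<in> I \<and> g \<in> J}"

fun ideal_pow :: "nat \<Rightarrow> 'k::field mpoly set \<Rightarrow> nat \<Rightarrow> 'k mpoly set" where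
  "ideal_pow n I 0 = polyring n"
| "ideal_pow n I (Suc m) = ideal_prod n (ideal_pow n I m) I"

definition colon_max :: "nat \<Rightarrow> 'k::field mpoly set \<Rightarrow> 'k mpoly set" where
  "colon_max n J = {f \<in> polyring n. \<forall>i<n. var i * f \<in> J}"

text \<open>Ideal of Veronese type I_{a,d} (indices shifted to 0,...,n-1).\<close>
definition veronese_ideal :: "nat \<Rightarrow> (nat \<Rightarrow> nat) \<Rightarrow> nat \<Rightarrow> 'k::field mpoly set" where
  "veronese_ideal n a d = ideal_gen n
     {monom u | u. Poly_Mapping.keys u \<subseteq> {..<n} \<and> mdeg u = d \<and> (\<forall>i<n. Poly_Mapping.lookup u i \<le> a i)}"

definition soc_ideal :: "nat \<Rightarrow> nat \<Rightarrow> 'k::field mpoly set \<Rightarrow> nat \<Rightarrow> 'k mpoly set" where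
  "soc_ideal n d I m = ideal_gen n
     {monom w | w. Poly_Mapping.keys w \<subseteq> {..<n} \<and> mdeg w = m * d - 1 \<and>
                   (\<forall>i<n. var i * monom w \<in> ideal_pow n I m)}"

text \<open>Soc(I) = (+)_{m>=0} (I^m : m)/I^m as graded module over the fiber cone F(I).
  Its degree-m component is nonzero iff (I^m : m) is not contained in I^m.  The F(I)-submodule
  generated by the degree-m0 component has degree-m component
  (I^{m-m0} (I^{m0} : m) + I^m)/I^m for m >= m0 (and 0 for m < m0).  Equi-generated: generated
  by the component of least degree with nonzero component (vacuous if the module is 0).\<close>
definition Soc_equigen :: "nat \<Rightarrow> 'k::field mpoly set \<Rightarrow> bool" where
  "Soc_equigen n I \<longleftrightarrow>
    (\<forall>m0. (\<not> colon_max n (ideal_pow n I m0) \<subseteq> ideal_pow n I m0 \<and>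
           (\<forall>i<m0. colon_max n (ideal_pow n I i) \<subseteq> ideal_pow n I i)) \<longrightarrow>
       (\<forall>m\<ge>m0. colon_max n (ideal_pow n I m) \<subseteq>
           {f + g | f g. f \<in> ideal_prod n (ideal_pow n I (m - m0)) (colon_max n (ideal_pow n I m0))
                        \<and> g \<in> ideal_pow n I m}))"

text \<open>Soc^*(I) = (+)_{m>=1} soc(I^m) as graded module over the Rees ring R(I) = (+) I^j;
  the submodule generated by the degree-m0 component has degree-m component
  I^{m-m0} soc(I^{m0}).\<close>
definition SocStar_equigen :: "nat \<Rightarrow> nat \<Rightarrow> 'k::field mpoly set \<Rightarrow> bool" where
  "SocStar_equigen n d I \<longleftrightarrow>
    (\<forall>m0\<ge>1. (soc_ideal n d I m0 \<noteq> {0} \<and> (\<forall>i. 1 \<le> i \<and> i < m0 \<longrightarrow> soc_ideal n d I i = {0})) \<longrightarrow>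
       (\<forall>m\<ge>m0. soc_ideal n d I m \<subseteq> ideal_prod n (ideal_pow n I (m - m0)) (soc_ideal n d I m0)))"

end

theory Submission
  imports Defs
begin

abbreviation lk :: "('a \<Rightarrow>\<^sub>0 'b::zero) \<Rightarrow> 'a \<Rightarrow> 'b" where "lk \<equiv> Poly_Mapping.lookup"
abbreviation ks :: "('a \<Rightarrow>\<^sub>0 'b::zero) \<Rightarrow> 'a set" where "ks \<equiv> Poly_Mapping.keys"
abbreviation sg :: "'a \<Rightarrow> 'b \<Rightarrow> ('a \<Rightarrow>\<^sub>0 'b::zero)" where "sg \<equiv> Poly_Mapping.single"

definition dvdm :: "(nat \<Rightarrow>\<^sub>0 nat) \<Rightarrow> (nat \<Rightarrow>\<^sub>0 nat) \<Rightarrow> bool" where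
  "dvdm \<mu> \<nu> \<longleftrightarrow> (\<forall>i. lk \<mu> i \<le> lk \<nu> i)"

definition MI :: "nat \<Rightarrow> (nat \<Rightarrow>\<^sub>0 nat) set \<Rightarrow> 'k::field mpoly set" where
  "MI n M = {p \<in> polyring n. \<forall>\<nu>\<in>ks p. \<exists>\<mu>\<in>M. dvdm \<mu> \<nu>}"

lemma dvdm_refl[simp]: "dvdm \<mu> \<mu>" by (simp add: dvdm_def)
lemma up_self: "x \<in> M \<Longrightarrow> \<exists>\<mu>\<in>M. dvdm \<mu> x"
  using dvdm_refl by blast
lemma dvdm_trans: "dvdm a b \<Longrightarrow> dvdm b c \<Longrightarrow> dvdm a c"
  unfolding dvdm_def by (meson le_trans)
lemma dvdm_add: "dvdm \<mu> \<nu> \<Longrightarrow> dvdm \<mu> (\<kappa> + \<nu>)"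
  unfolding dvdm_def lookup_add by (simp add: trans_le_add2)
lemma dvdm_add2: "dvdm \<mu>1 \<nu>1 \<Longrightarrow> dvdm \<mu>2 \<nu>2 \<Longrightarrow> dvdm (\<mu>1 + \<mu>2) (\<nu>1 + \<nu>2)"
  unfolding dvdm_def lookup_add by (simp add: add_mono)

lemma keys_add_nat: "ks ((a::nat \<Rightarrow>\<^sub>0 nat) + b) = ks a \<union> ks b"
  by (auto simp: in_keys_iff lookup_add)

lemma polyring_iff: "p \<in> polyring n \<longleftrightarrow> (\<forall>\<mu>\<in>ks p. ks \<mu> \<subseteq> {..<n})"
  by (simp add: polyring_def)

lemma polyring_add: "p \<in> polyring n \<Longrightarrow> q \<in> polyring n \<Longrightarrow> p + q \<in> polyring n"
  unfolding polyring_iff using keys_add[of p q] by (meson Un_iff subsetD)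

lemma polyring_mult: "p \<in> polyring n \<Longrightarrow> q \<in> polyring n \<Longrightarrow> p * q \<in> polyring n"
  unfolding polyring_iff using keys_mult[of p q] by (fastforce simp: keys_add_nat)

lemma polyring_zero[simp]: "0 \<in> polyring n"
  by (simp add: polyring_iff)

lemma polyring_sum: "(\<And>x. x \<in> X \<Longrightarrow> f x \<in> polyring n) \<Longrightarrow> sum f X \<in> polyring n"
  by (induction X rule: infinite_finite_induct) (auto intro: polyring_add)

lemma polyring_single: "ks \<mu> \<subseteq> {..<n} \<Longrightarrow> sg \<mu> c \<in> polyring n"
  by (simp add: polyring_iff)

lemma keys_monom[simp]: "ks (monom \<mu> :: 'k::field mpoly) = {\<mu>}"
  by (simp add: monom_def)

lemma monom_polyring: "ks \<mu> \<subseteq> {..<n} \<Longrightarrow> (monom \<mu> :: 'k::field mpoly) \<in> polyring n"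
  by (simp add: polyring_iff)

lemma keys_polyringD: "p \<in> polyring n \<Longrightarrow> \<nu> \<in> ks p \<Longrightarrow> ks \<nu> \<subseteq> {..<n}"
  by (simp add: polyring_iff)

lemma MI_zero[simp]: "0 \<in> MI n M" by (simp add: MI_def)

lemma MI_add: "p \<in> MI n M \<Longrightarrow> q \<in> MI n M \<Longrightarrow> p + q \<in> MI n M"
  unfolding MI_def using keys_add[of p q] by (auto intro: polyring_add)

lemma MI_mult: "c \<in> polyring n \<Longrightarrow> p \<in> MI n M \<Longrightarrow> c * p \<in> MI n M"
proof -
  assume c: "c \<in> polyring n" and p: "p \<in> MI n M"
  have "c * p \<in> polyring n" using c p by (auto simp: MI_def intro: polyring_mult)
  moreover have "\<forall>\<nu>\<in>ks (c*p). \<exists>\<mu>\<in>M. dvdm \<mu> \<nu>"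
  proof
    fix \<nu> assume "\<nu> \<in> ks (c*p)"
    then obtain x y where "\<nu> = x + y" "y \<in> ks p" using keys_mult[of c p] by auto
    then show "\<exists>\<mu>\<in>M. dvdm \<mu> \<nu>" using p by (auto simp: MI_def intro: dvdm_add)
  qed
  ultimately show ?thesis by (simp add: MI_def)
qed

lemma MI_sum: "(\<And>x. x \<in> X \<Longrightarrow> f x \<in> MI n M) \<Longrightarrow> sum f X \<in> MI n M"
  by (induction X rule: infinite_finite_induct) (auto intro: MI_add)

lemma ideal_gen_sub_MI: "G \<subseteq> MI n M \<Longrightarrow> ideal_gen n G \<subseteq> MI n M"
  unfolding ideal_gen_def by (auto intro!: MI_sum MI_mult)

lemma ideal_gen_mono: "G \<subseteq> H \<Longrightarrow> ideal_gen n G \<subseteq> ideal_gen n H"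
  unfolding ideal_gen_def by blast

lemma ideal_gen_zero: "0 \<in> ideal_gen n G"
  unfolding ideal_gen_def by (rule CollectI, rule exI[of _ "{}"], auto)

lemma ideal_gen_single: "g \<in> G \<Longrightarrow> c \<in> polyring n \<Longrightarrow> c * g \<in> ideal_gen n G"
  unfolding ideal_gen_def by (rule CollectI, rule exI[of _ "{g}"], rule exI[of _ "\<lambda>_. c"], auto)

lemma sr: "(\<Sum>x\<in>S. if x \<in> A then h x else 0) = sum h A" if "finite S" "A \<subseteq> S"
    for S A and h :: "'a \<Rightarrow> 'b::comm_monoid_add"
    using sum.inter_restrict[OF that(1), of h A] that(2) by (simp add: Int_absorb1)

lemma ideal_gen_add:
  assumes "p \<in> ideal_gen n G" "q \<in> ideal_gen n G"
  shows "p + q \<in> ideal_gen n G"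
proof -
  obtain F1 c1 where 1: "p = (\<Sum>g\<in>F1. c1 g * g)" "finite F1" "F1 \<subseteq> G" "\<forall>g\<in>F1. c1 g \<in> polyring n"
    using assms(1) unfolding ideal_gen_def by blast
  obtain F2 c2 where 2: "q = (\<Sum>g\<in>F2. c2 g * g)" "finite F2" "F2 \<subseteq> G" "\<forall>g\<in>F2. c2 g \<in> polyring n"
    using assms(2) unfolding ideal_gen_def by blast
  define c where "c g = (if g \<in> F1 then c1 g else 0) + (if g \<in> F2 then c2 g else 0)" for g
  have "(\<Sum>g\<in>F1 \<union> F2. c g * g) = (\<Sum>g\<in>F1 \<union> F2. (if g \<in> F1 then c1 g * g else 0)
      + (if g \<in> F2 then c2 g * g else 0))"
    by (rule sum.cong[OF refl]) (simp add: c_def distrib_right)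
  also have "\<dots> = (\<Sum>g\<in>F1 \<union> F2. (if g \<in> F1 then c1 g * g else 0))
      + (\<Sum>g\<in>F1 \<union> F2. (if g \<in> F2 then c2 g * g else 0))"
    by (rule sum.distrib)
  also have "\<dots> = p + q"
  proof -
    have "(\<Sum>g\<in>F1 \<union> F2. (if g \<in> F1 then c1 g * g else 0)) = p"
      using sr[of "F1 \<union> F2" F1 "\<lambda>g. c1 g * g"] 1(1) 1(2) 2(2) by simp
    moreover have "(\<Sum>g\<in>F1 \<union> F2. (if g \<in> F2 then c2 g * g else 0)) = q"
      using sr[of "F1 \<union> F2" F2 "\<lambda>g. c2 g * g"] 2(1) 1(2) 2(2) by simp
    ultimately show ?thesis by simp
  qed
  finally have e0: "(\<Sum>g\<in>F1 \<union> F2. c g * g) = p + q" .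
  note e = e0[symmetric]
  have cp: "\<forall>g\<in>F1 \<union> F2. c g \<in> polyring n"
    using 1(4) 2(4) by (auto simp: c_def intro: polyring_add)
  show ?thesis unfolding ideal_gen_def
  proof (intro CollectI exI conjI)
    show "p + q = (\<Sum>g\<in>F1 \<union> F2. c g * g)" by (rule e)
    show "finite (F1 \<union> F2)" using 1(2) 2(2) by simp
    show "F1 \<union> F2 \<subseteq> G" using 1(3) 2(3) by simp
    show "\<forall>g\<in>F1 \<union> F2. c g \<in> polyring n" by (rule cp)
  qed
qed

lemma ideal_gen_sum: "(\<And>x. x \<in> X \<Longrightarrow> f x \<in> ideal_gen n G) \<Longrightarrow> sum f X \<in> ideal_gen n G"
proof (induction X rule: infinite_finite_induct)
  case (infinite A)
  then show ?case by (simp add: ideal_gen_zero)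
next
  case empty
  then show ?case by (simp add: ideal_gen_zero)
next
  case (insert x F)
  then show ?case by (simp add: ideal_gen_add)
qed

lemma poly_expand: "f = (\<Sum>\<nu>\<in>ks f. sg \<nu> (lk f \<nu>))"
proof (rule poly_mapping_eqI)
  fix k
  have "lk f k = (\<Sum>\<nu>\<in>ks f. if \<nu> = k then lk f \<nu> else 0)"
    by (simp add: sum.delta in_keys_iff)
  also have "\<dots> = lk (\<Sum>\<nu>\<in>ks f. sg \<nu> (lk f \<nu>)) k"
    by (simp add: lookup_sum lookup_single when_def)
  finally show "lk f k = lk (\<Sum>\<nu>\<in>ks f. sg \<nu> (lk f \<nu>)) k" .
qed

lemma dvdm_minus_add: "dvdm \<mu> \<nu> \<Longrightarrow> (\<nu> - \<mu>) + \<mu> = \<nu>"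
  by (rule poly_mapping_eqI) (simp add: lookup_add lookup_minus dvdm_def)

lemma keys_minus_sub: "ks ((\<nu>::nat\<Rightarrow>\<^sub>0nat) - \<mu>) \<subseteq> ks \<nu>"
  by (auto simp: in_keys_iff lookup_minus)

lemma MI_sub_ideal_gen:
  assumes "M \<subseteq> {\<mu>. ks \<mu> \<subseteq> {..<n}}"
  shows "MI n M \<subseteq> (ideal_gen n (monom ` M) :: 'k::field mpoly set)"
proof
  fix p :: "'k mpoly" assume p: "p \<in> MI n M"
  have "sg \<nu> (lk p \<nu>) \<in> ideal_gen n (monom ` M)" if \<nu>: "\<nu> \<in> ks p" for \<nu>
  proof -
    obtain \<mu> where \<mu>: "\<mu> \<in> M" "dvdm \<mu> \<nu>" using p \<nu> by (auto simp: MI_def)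
    have kn: "ks \<nu> \<subseteq> {..<n}" using p \<nu> by (auto simp: MI_def polyring_iff)
    have "sg \<nu> (lk p \<nu>) = sg (\<nu> - \<mu>) (lk p \<nu>) * monom \<mu>"
      by (simp add: monom_def mult_single dvdm_minus_add[OF \<mu>(2)])
    moreover have "sg (\<nu> - \<mu>) (lk p \<nu>) \<in> polyring n"
      using kn keys_minus_sub[of \<nu> \<mu>] by (intro polyring_single) auto
    ultimately show ?thesis using \<mu> by (auto intro: ideal_gen_single)
  qed
  then have "(\<Sum>\<nu>\<in>ks p. sg \<nu> (lk p \<nu>)) \<in> ideal_gen n (monom ` M)"
    by (intro ideal_gen_sum)
  then show "p \<in> ideal_gen n (monom ` M)" by (subst poly_expand[of p])
qed

lemma monom_in_MI: "(monom \<nu> :: 'k::field mpoly) \<in> MI n M \<longleftrightarrow> ks \<nu> \<subseteq> {..<n} \<and> (\<exists>\<mu>\<in>M. dvdm \<mu> \<nu>)"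
  by (auto simp: MI_def polyring_iff)

lemma ideal_gen_monom_eq:
  assumes "M \<subseteq> {\<mu>. ks \<mu> \<subseteq> {..<n}}"
  shows "ideal_gen n (monom ` M) = (MI n M :: 'k::field mpoly set)"
proof
  show "ideal_gen n (monom ` M) \<subseteq> (MI n M :: 'k::field mpoly set)"
  proof (intro ideal_gen_sub_MI image_subsetI)
    fix x assume "x \<in> M"
    then show "(monom x :: 'k mpoly) \<in> MI n M" using assms unfolding monom_in_MI
      by (meson dvdm_refl mem_Collect_eq subsetD)
  qed
  show "MI n M \<subseteq> (ideal_gen n (monom ` M) :: 'k::field mpoly set)"
    using MI_sub_ideal_gen[OF assms] .
qed

lemma MI_prod:
  assumes "M1 \<subseteq> {\<mu>. ks \<mu> \<subseteq> {..<n}}" "M2 \<subseteq> {\<mu>. ks \<mu> \<subseteq> {..<n}}"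
  shows "ideal_prod n (MI n M1) (MI n M2) = (MI n {\<mu>1 + \<mu>2 | \<mu>1 \<mu>2. \<mu>1 \<in> M1 \<and> \<mu>2 \<in> M2} :: 'k::field mpoly set)"
    (is "?L = MI n ?M")
proof
  have "f * g \<in> MI n ?M" if f: "f \<in> MI n M1" and g: "g \<in> MI n M2" for f g :: "'k mpoly"
  proof -
    have "f * g \<in> polyring n" using f g by (auto simp: MI_def intro: polyring_mult)
    moreover have "\<exists>\<mu>\<in>?M. dvdm \<mu> \<nu>" if nu: "\<nu> \<in> ks (f * g)" for \<nu>
    proof -
      obtain x y where xy: "\<nu> = x + y" "x \<in> ks f" "y \<in> ks g" using nu keys_mult[of f g] by auto
      obtain \<mu>1 where 1: "\<mu>1 \<in> M1" "dvdm \<mu>1 x" using f xy(2) unfolding MI_def by blast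
      obtain \<mu>2 where 2: "\<mu>2 \<in> M2" "dvdm \<mu>2 y" using g xy(3) unfolding MI_def by blast
      have "\<mu>1 + \<mu>2 \<in> ?M" using 1 2 by blast
      moreover have "dvdm (\<mu>1 + \<mu>2) \<nu>" using 1 2 xy(1) by (simp add: dvdm_add2)
      ultimately show ?thesis by blast
    qed
    ultimately show ?thesis by (simp add: MI_def)
  qed
  then show "?L \<subseteq> MI n ?M"
    unfolding ideal_prod_def by (intro ideal_gen_sub_MI) blast
  have "?M \<subseteq> {\<mu>. ks \<mu> \<subseteq> {..<n}}" using assms unfolding subset_iff by (auto simp: keys_add_nat)
  then have "MI n ?M \<subseteq> (ideal_gen n (monom ` ?M) :: 'k mpoly set)" by (rule MI_sub_ideal_gen)
  also have "\<dots> \<subseteq> ?L" unfolding ideal_prod_def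
  proof (rule ideal_gen_mono, rule image_subsetI)
    fix \<mu> assume "\<mu> \<in> ?M"
    then obtain \<mu>1 \<mu>2 where m: "\<mu> = \<mu>1 + \<mu>2" "\<mu>1 \<in> M1" "\<mu>2 \<in> M2" by blast
    have "(monom \<mu>1 :: 'k mpoly) \<in> MI n M1" using m(2) assms(1) by (auto simp: monom_in_MI intro: up_self)
    moreover have "(monom \<mu>2 :: 'k mpoly) \<in> MI n M2" using m(3) assms(2) by (auto simp: monom_in_MI intro: up_self)
    moreover have "(monom \<mu> :: 'k mpoly) = monom \<mu>1 * monom \<mu>2" by (simp add: m(1) monom_def mult_single)
    ultimately show "(monom \<mu> :: 'k mpoly) \<in> {f * g |f g. f \<in> MI n M1 \<and> g \<in> MI n M2}" by blast
  qed
  finally show "MI n ?M \<subseteq> ?L" .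
qed


section \<open>Monomial combinatorics\<close>

lemma split_sum:
  fixes l u :: "'a \<Rightarrow> nat"
  assumes "finite I" "\<forall>i\<in>I. l i \<le> u i" "sum l I \<le> t" "t \<le> sum u I"
  shows "\<exists>x. (\<forall>i\<in>I. l i \<le> x i \<and> x i \<le> u i) \<and> sum x I = t"
  using assms
proof (induction I arbitrary: t rule: finite_induct)
  case empty
  then show ?case by simp
next
  case (insert j F)
  define xj where "xj = min (u j) (t - sum l F)"
  have lj: "l j \<le> xj" using insert.prems insert.hyps by (simp add: xj_def)
  have uj: "xj \<le> u j" by (simp add: xj_def)
  have lf: "sum l F \<le> sum u F" using insert.prems(1) by (intro sum_mono) auto
  have "sum l F \<le> t - xj" "t - xj \<le> sum u F"
    using insert.prems insert.hyps lf by (auto simp: xj_def min_def)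
  then obtain x where x: "\<forall>i\<in>F. l i \<le> x i \<and> x i \<le> u i" "sum x F = t - xj"
    using insert.IH insert.prems(1) by blast
  have "xj \<le> t" using insert.prems insert.hyps by (simp add: xj_def)
  define x' where "x' = x(j := xj)"
  have "sum x' F = sum x F" unfolding x'_def using insert.hyps by (intro sum.cong) auto
  then have "sum x' (insert j F) = t" using insert.hyps x(2) \<open>xj \<le> t\<close> by (simp add: x'_def)
  moreover have "\<forall>i\<in>insert j F. l i \<le> x' i \<and> x' i \<le> u i"
    using x(1) lj uj insert.hyps by (auto simp: x'_def)
  ultimately show ?case by blast
qed

lemma sum_mult_le:
  fixes f g :: "'a \<Rightarrow> nat"
  assumes "\<forall>i\<in>I. c * f i \<le> g i"
  shows "c * sum f I \<le> sum g I"
  using assms by (simp add: sum_distrib_left sum_mono)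

definition mk :: "nat \<Rightarrow> (nat \<Rightarrow> nat) \<Rightarrow> (nat \<Rightarrow>\<^sub>0 nat)" where
  "mk n f = Abs_poly_mapping (\<lambda>i. if i < n then f i else 0)"

lemma lk_mk: "lk (mk n f) i = (if i < n then f i else 0)"
proof -
  have "finite {i. (if i < n then f i else 0) \<noteq> 0}"
    by (rule finite_subset[of _ "{..<n}"]) (auto split: if_splits)
  then show ?thesis unfolding mk_def by simp
qed

lemma ks_mk: "ks (mk n f) \<subseteq> {..<n}"
  by (auto simp: in_keys_iff lk_mk split: if_splits)

lemma inS_lk: "ks \<mu> \<subseteq> {..<n} \<Longrightarrow> \<not> i < n \<Longrightarrow> lk \<mu> i = 0"
  by (meson lessThan_iff not_in_keys_iff_lookup_eq_zero subsetD)

lemma mdeg_eq: "ks \<mu> \<subseteq> {..<n} \<Longrightarrow> mdeg \<mu> = (\<Sum>i<n. lk \<mu> i)"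
  unfolding mdeg_def
  by (rule sum.mono_neutral_left) (auto simp: in_keys_iff)

lemma mdeg_mk: "mdeg (mk n f) = (\<Sum>i<n. f i)"
  by (simp add: mdeg_eq[OF ks_mk] lk_mk)

lemma dvdm_inS: "dvdm \<mu> \<nu> \<Longrightarrow> ks \<nu> \<subseteq> {..<n} \<Longrightarrow> ks \<mu> \<subseteq> {..<n}"
  unfolding dvdm_def by (metis in_keys_iff le_zero_eq not_in_keys_iff_lookup_eq_zero subsetD subsetI)

lemma mdeg_mono: "dvdm \<mu> \<nu> \<Longrightarrow> ks \<nu> \<subseteq> {..<n} \<Longrightarrow> mdeg \<mu> \<le> mdeg \<nu>"
  using dvdm_inS[of \<mu> \<nu> n] by (simp add: mdeg_eq sum_mono dvdm_def)

lemma mdeg_add: "ks \<mu> \<subseteq> {..<n} \<Longrightarrow> ks \<nu> \<subseteq> {..<n} \<Longrightarrow> mdeg (\<mu> + \<nu>) = mdeg \<mu> + mdeg \<nu>"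
  by (simp add: mdeg_eq keys_add_nat lookup_add sum.distrib)

definition Ver :: "nat \<Rightarrow> (nat \<Rightarrow> nat) \<Rightarrow> nat \<Rightarrow> (nat \<Rightarrow>\<^sub>0 nat) set" where
  "Ver n b e = {u. ks u \<subseteq> {..<n} \<and> mdeg u = e \<and> (\<forall>i<n. lk u i \<le> b i)}"

lemma Ver_inS: "Ver n b e \<subseteq> {\<mu>. ks \<mu> \<subseteq> {..<n}}"
  by (auto simp: Ver_def)

lemma ver_up:
  assumes "ks \<nu> \<subseteq> {..<n}"
  shows "(\<exists>\<mu>\<in>Ver n b e. dvdm \<mu> \<nu>) \<longleftrightarrow> e \<le> (\<Sum>i<n. min (lk \<nu> i) (b i))"
proof
  assume "\<exists>\<mu>\<in>Ver n b e. dvdm \<mu> \<nu>"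
  then obtain \<mu> where \<mu>: "\<mu> \<in> Ver n b e" "dvdm \<mu> \<nu>" by blast
  have "e = (\<Sum>i<n. lk \<mu> i)" using \<mu>(1) mdeg_eq[of \<mu> n] by (simp add: Ver_def)
  also have "\<dots> \<le> (\<Sum>i<n. min (lk \<nu> i) (b i))"
    using \<mu> by (intro sum_mono) (auto simp: Ver_def dvdm_def)
  finally show "e \<le> (\<Sum>i<n. min (lk \<nu> i) (b i))" .
next
  assume "e \<le> (\<Sum>i<n. min (lk \<nu> i) (b i))"
  then obtain x where x: "\<forall>i\<in>{..<n}. 0 \<le> x i \<and> x i \<le> min (lk \<nu> i) (b i)" "sum x {..<n} = e"
    using split_sum[of "{..<n}" "\<lambda>_. 0" "\<lambda>i. min (lk \<nu> i) (b i)" e] by auto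
  have "mk n x \<in> Ver n b e"
    using x by (auto simp: Ver_def ks_mk mdeg_mk lk_mk)
  moreover have "dvdm (mk n x) \<nu>"
    using x assms by (auto simp: dvdm_def lk_mk inS_lk)
  ultimately show "\<exists>\<mu>\<in>Ver n b e. dvdm \<mu> \<nu>" by blast
qed

lemma MI_cong:
  assumes "\<And>\<nu>. ks \<nu> \<subseteq> {..<n} \<Longrightarrow> (\<exists>\<mu>\<in>M. dvdm \<mu> \<nu>) \<longleftrightarrow> (\<exists>\<mu>\<in>M'. dvdm \<mu> \<nu>)"
  shows "MI n M = MI n M'"
  unfolding MI_def using assms keys_polyringD by blast

lemma MI_mono:
  assumes "\<And>\<nu>. ks \<nu> \<subseteq> {..<n} \<Longrightarrow> (\<exists>\<mu>\<in>M. dvdm \<mu> \<nu>) \<Longrightarrow> (\<exists>\<mu>\<in>M'. dvdm \<mu> \<nu>)"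
  shows "MI n M \<subseteq> MI n M'"
  unfolding MI_def using assms keys_polyringD by blast

lemma pow_split_arith1:
  fixes x c m :: nat
  assumes "x \<le> (m + 1) * c"
  shows "(m + 1) * (x - m * c) \<le> x"
proof (cases "m * c \<le> x")
  case True
  have "x - m * c \<le> c" using assms by (simp add: algebra_simps)
  then have "m * (x - m * c) \<le> m * c" by simp
  then show ?thesis using True by (simp add: algebra_simps)
next
  case False
  then show ?thesis by simp
qed

lemma pow_split_arith2:
  fixes x c m :: nat
  assumes "x \<le> (m + 1) * c"
  shows "x \<le> (m + 1) * min x c"
  using assms by (cases "x \<le> c") (auto simp: min_def algebra_simps trans_le_add1)

lemma Ver_sum_split:
  assumes "ks \<nu> \<subseteq> {..<n}"
  shows "(\<exists>\<mu>\<in>{\<mu>1 + \<mu>2 | \<mu>1 \<mu>2. \<mu>1 \<in> Ver n (\<lambda>i. m * a i) (m * d) \<and> \<mu>2 \<in> Ver n a d}. dvdm \<mu> \<nu>)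
     \<longleftrightarrow> (\<exists>\<mu>\<in>Ver n (\<lambda>i. Suc m * a i) (Suc m * d). dvdm \<mu> \<nu>)"
proof
  assume "\<exists>\<mu>\<in>{\<mu>1 + \<mu>2 | \<mu>1 \<mu>2. \<mu>1 \<in> Ver n (\<lambda>i. m * a i) (m * d) \<and> \<mu>2 \<in> Ver n a d}. dvdm \<mu> \<nu>"
  then obtain \<mu>1 \<mu>2 where m: "\<mu>1 \<in> Ver n (\<lambda>i. m * a i) (m * d)" "\<mu>2 \<in> Ver n a d" "dvdm (\<mu>1 + \<mu>2) \<nu>"
    by blast
  have "\<forall>i<n. lk (\<mu>1 + \<mu>2) i \<le> Suc m * a i"
  proof (intro allI impI)
    fix i assume "i < n"
    then have "lk \<mu>1 i \<le> m * a i" "lk \<mu>2 i \<le> a i" using m(1,2) by (auto simp: Ver_def)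
    then show "lk (\<mu>1 + \<mu>2) i \<le> Suc m * a i" by (simp add: lookup_add)
  qed
  then have "\<mu>1 + \<mu>2 \<in> Ver n (\<lambda>i. Suc m * a i) (Suc m * d)"
    using m(1,2) by (auto simp: Ver_def keys_add_nat mdeg_add)
  then show "\<exists>\<mu>\<in>Ver n (\<lambda>i. Suc m * a i) (Suc m * d). dvdm \<mu> \<nu>" using m(3) by blast
next
  assume "\<exists>\<mu>\<in>Ver n (\<lambda>i. Suc m * a i) (Suc m * d). dvdm \<mu> \<nu>"
  then obtain \<mu> where \<mu>: "\<mu> \<in> Ver n (\<lambda>i. Suc m * a i) (Suc m * d)" "dvdm \<mu> \<nu>" by blast
  have kmu: "ks \<mu> \<subseteq> {..<n}" and dmu: "(\<Sum>i<n. lk \<mu> i) = Suc m * d"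
    and bmu: "\<forall>i<n. lk \<mu> i \<le> (m + 1) * a i"
    using \<mu>(1) mdeg_eq[of \<mu> n] by (auto simp: Ver_def)
  define l where "l i = lk \<mu> i - m * a i" for i
  define u where "u i = min (lk \<mu> i) (a i)" for i
  have lu: "\<forall>i\<in>{..<n}. l i \<le> u i"
    using bmu by (auto simp: l_def u_def algebra_simps)
  have "(m + 1) * sum l {..<n} \<le> (\<Sum>i<n. lk \<mu> i)"
    using bmu pow_split_arith1 unfolding l_def by (intro sum_mult_le) blast
  then have sl: "sum l {..<n} \<le> d" using dmu
    by (metis Suc_eq_plus1 mult_le_cancel1 zero_less_Suc)
  have "(\<Sum>i<n. lk \<mu> i) \<le> (m + 1) * sum u {..<n}"
    unfolding sum_distrib_left using bmu by (intro sum_mono) (auto simp: u_def intro: pow_split_arith2)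
  then have "Suc m * d \<le> Suc m * sum u {..<n}" using dmu by simp
  then have su: "d \<le> sum u {..<n}" by (simp only: Suc_mult_le_cancel1)
  obtain y where y: "\<forall>i\<in>{..<n}. l i \<le> y i \<and> y i \<le> u i" "sum y {..<n} = d"
    using split_sum[OF _ lu sl su] by auto
  define \<mu>2 where "\<mu>2 = mk n y"
  define \<mu>1 where "\<mu>1 = \<mu> - \<mu>2"
  have d2: "dvdm \<mu>2 \<mu>" using y kmu by (auto simp: dvdm_def \<mu>2_def lk_mk u_def)
  have e: "\<mu>1 + \<mu>2 = \<mu>" unfolding \<mu>1_def using dvdm_minus_add[OF d2] .
  have v2: "\<mu>2 \<in> Ver n a d" using y by (auto simp: Ver_def \<mu>2_def ks_mk mdeg_mk lk_mk u_def)
  have k1: "ks \<mu>1 \<subseteq> {..<n}" using kmu keys_minus_sub[of \<mu> \<mu>2] by (auto simp: \<mu>1_def)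
  have "mdeg \<mu> = mdeg \<mu>1 + mdeg \<mu>2" using e k1 ks_mk[of n y] by (metis \<mu>2_def mdeg_add)
  then have "mdeg \<mu>1 = m * d" using \<mu>(1) v2 by (simp add: Ver_def)
  moreover have "\<forall>i<n. lk \<mu>1 i \<le> m * a i"
  proof (intro allI impI)
    fix i assume "i < n"
    then have "lk \<mu> i - m * a i \<le> y i" using y(1) by (auto simp: l_def)
    then show "lk \<mu>1 i \<le> m * a i" using \<open>i < n\<close> by (simp add: \<mu>1_def \<mu>2_def lookup_minus lk_mk)
  qed
  ultimately have v1: "\<mu>1 \<in> Ver n (\<lambda>i. m * a i) (m * d)" using k1 by (simp add: Ver_def)
  show "\<exists>\<mu>\<in>{\<mu>1 + \<mu>2 | \<mu>1 \<mu>2. \<mu>1 \<in> Ver n (\<lambda>i. m * a i) (m * d) \<and> \<mu>2 \<in> Ver n a d}. dvdm \<mu> \<nu>"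
    using v1 v2 e \<mu>(2) by blast
qed

lemma veronese_MI: "veronese_ideal n a d = (MI n (Ver n a d) :: 'k::field mpoly set)"
proof -
  have "{monom u | u. ks u \<subseteq> {..<n} \<and> mdeg u = d \<and> (\<forall>i<n. lk u i \<le> a i)} = (monom ` Ver n a d :: 'k mpoly set)"
    by (auto simp: Ver_def)
  then show ?thesis unfolding veronese_ideal_def using ideal_gen_monom_eq[OF Ver_inS] by simp
qed

lemma Ver_zero: "Ver n (\<lambda>i. 0 * a i) (0 * d) = {0}"
proof -
  have "u = 0" if "u \<in> Ver n (\<lambda>i. 0 * a i) (0 * d)" for u
    using that by (intro poly_mapping_eqI) (auto simp: Ver_def dest: inS_lk[of u n])
  moreover have "0 \<in> Ver n (\<lambda>i. 0 * a i) (0 * d)" by (simp add: Ver_def mdeg_def)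
  ultimately show ?thesis by blast
qed

lemma pow_MI: "ideal_pow n (veronese_ideal n a d) m = (MI n (Ver n (\<lambda>i. m * a i) (m * d)) :: 'k::field mpoly set)"
proof (induction m)
  case 0
  have "MI n {0} = (polyring n :: 'k mpoly set)"
    by (auto simp: MI_def dvdm_def)
  then show ?case using Ver_zero[of n a d] by simp
next
  case (Suc m)
  have "ideal_pow n (veronese_ideal n a d) (Suc m)
      = ideal_prod n (MI n (Ver n (\<lambda>i. m * a i) (m * d))) (MI n (Ver n a d) :: 'k mpoly set)"
    using Suc by (simp add: veronese_MI)
  also have "\<dots> = MI n {\<mu>1 + \<mu>2 | \<mu>1 \<mu>2. \<mu>1 \<in> Ver n (\<lambda>i. m * a i) (m * d) \<and> \<mu>2 \<in> Ver n a d}"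
    by (rule MI_prod[OF Ver_inS Ver_inS])
  also have "\<dots> = MI n (Ver n (\<lambda>i. Suc m * a i) (Suc m * d))"
    by (rule MI_cong) (rule Ver_sum_split)
  finally show ?case .
qed


section \<open>Socle and colon\<close>

definition SocS :: "nat \<Rightarrow> (nat \<Rightarrow> nat) \<Rightarrow> nat \<Rightarrow> nat \<Rightarrow> (nat \<Rightarrow>\<^sub>0 nat) set" where
  "SocS n a d m = {w. ks w \<subseteq> {..<n} \<and> mdeg w = m * d - 1 \<and> (\<forall>i<n. lk w i < m * a i)}"

lemma SocS_inS: "SocS n a d m \<subseteq> {\<mu>. ks \<mu> \<subseteq> {..<n}}"
  by (auto simp: SocS_def)

lemma lk_ei: "lk (sg i 1 + (\<nu> :: nat \<Rightarrow>\<^sub>0 nat)) j = lk \<nu> j + (if j = i then 1 else 0)"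
  by (cases "j = i") (simp_all add: lookup_add lookup_single when_def)

lemma ks_ei: "i < n \<Longrightarrow> ks (\<nu> :: nat \<Rightarrow>\<^sub>0 nat) \<subseteq> {..<n} \<Longrightarrow> ks (sg i 1 + \<nu>) \<subseteq> {..<n}"
  by (simp add: keys_add_nat)

lemma F_ei_rw:
  "(\<Sum>j<n. min (lk (sg i 1 + (\<nu> :: nat \<Rightarrow>\<^sub>0 nat)) j) (c j)) = (\<Sum>j<n. min (lk \<nu> j + (if j = i then 1 else 0)) (c j))"
  by (simp only: lk_ei)

lemma F_ei_le:
  fixes \<nu> :: "nat \<Rightarrow>\<^sub>0 nat"
  assumes "i < n"
  shows "(\<Sum>j<n. min (lk (sg i 1 + \<nu>) j) (c j)) \<le> (\<Sum>j<n. min (lk \<nu> j) (c j)) + 1"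
proof -
  have "(\<Sum>j<n. min (lk \<nu> j + (if j = i then 1 else 0)) (c j)) \<le> (\<Sum>j<n. min (lk \<nu> j) (c j) + (if j = i then 1 else 0))"
    by (intro sum_mono) (auto simp: min_def)
  also have "\<dots> = (\<Sum>j<n. min (lk \<nu> j) (c j)) + 1"
    using assms by (simp add: sum.distrib)
  finally show ?thesis by (simp only: F_ei_rw)
qed

lemma F_ei_eq:
  fixes \<nu> :: "nat \<Rightarrow>\<^sub>0 nat"
  assumes "c i \<le> lk \<nu> i"
  shows "(\<Sum>j<n. min (lk (sg i 1 + \<nu>) j) (c j)) = (\<Sum>j<n. min (lk \<nu> j) (c j))"
proof -
  have "(\<Sum>j<n. min (lk \<nu> j + (if j = i then 1 else 0)) (c j)) = (\<Sum>j<n. min (lk \<nu> j) (c j))"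
    using assms by (intro sum.cong) (auto simp: min_def)
  then show ?thesis by (simp only: F_ei_rw)
qed

lemma F_ei_all:
  fixes \<nu> :: "nat \<Rightarrow>\<^sub>0 nat"
  assumes "i < n" "\<forall>j<n. lk \<nu> j < c j" "ks \<nu> \<subseteq> {..<n}"
  shows "(\<Sum>j<n. min (lk (sg i 1 + \<nu>) j) (c j)) = mdeg \<nu> + 1"
proof -
  have "(\<Sum>j<n. min (lk \<nu> j + (if j = i then 1 else 0)) (c j)) = (\<Sum>j<n. lk \<nu> j + (if j = i then 1 else 0))"
    using assms(2) by (intro sum.cong) (auto simp: min_def)
  also have "\<dots> = mdeg \<nu> + 1"
    using assms by (simp add: sum.distrib mdeg_eq)
  finally show ?thesis by (simp only: F_ei_rw)
qed

lemma F_all: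
  fixes \<nu> :: "nat \<Rightarrow>\<^sub>0 nat"
  assumes "\<forall>j<n. lk \<nu> j < c j" "ks \<nu> \<subseteq> {..<n}"
  shows "(\<Sum>j<n. min (lk \<nu> j) (c j)) = mdeg \<nu>"
proof -
  have "(\<Sum>j<n. min (lk \<nu> j) (c j)) = (\<Sum>j<n. lk \<nu> j)"
    using assms(1) by (intro sum.cong) (auto simp: min_def)
  then show ?thesis using assms(2) by (simp add: mdeg_eq)
qed

lemma soc_key:
  assumes w: "ks w \<subseteq> {..<n}" "mdeg w = m * d - 1" and md: "1 \<le> m * d"
  shows "(\<forall>i<n. \<exists>\<mu>\<in>Ver n (\<lambda>i. m * a i) (m * d). dvdm \<mu> (sg i 1 + w)) \<longleftrightarrow> (\<forall>i<n. lk w i < m * a i)"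
proof
  assume H: "\<forall>i<n. \<exists>\<mu>\<in>Ver n (\<lambda>i. m * a i) (m * d). dvdm \<mu> (sg i 1 + w)"
  show "\<forall>i<n. lk w i < m * a i"
  proof (intro allI impI, rule ccontr)
    fix i assume i: "i < n" and "\<not> lk w i < m * a i"
    then have "m * a i \<le> lk w i" by simp
    then have "(\<Sum>j<n. min (lk (sg i 1 + w) j) (m * a j)) = (\<Sum>j<n. min (lk w j) (m * a j))"
      by (rule F_ei_eq)
    also have "\<dots> \<le> (\<Sum>j<n. lk w j)" by (intro sum_mono) simp
    also have "\<dots> = m * d - 1" using w by (simp add: mdeg_eq)
    finally have "(\<Sum>j<n. min (lk (sg i 1 + w) j) (m * a j)) < m * d" using md by linarith
    then show False using H i ver_up[OF ks_ei[OF i w(1)]] by (meson not_le)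
  qed
next
  assume H: "\<forall>i<n. lk w i < m * a i"
  show "\<forall>i<n. \<exists>\<mu>\<in>Ver n (\<lambda>i. m * a i) (m * d). dvdm \<mu> (sg i 1 + w)"
  proof (intro allI impI)
    fix i assume i: "i < n"
    have "(\<Sum>j<n. min (lk (sg i 1 + w) j) (m * a j)) = m * d"
      using F_ei_all[OF i H w(1)] w(2) md by simp
    then show "\<exists>\<mu>\<in>Ver n (\<lambda>i. m * a i) (m * d). dvdm \<mu> (sg i 1 + w)"
      using ver_up[OF ks_ei[OF i w(1)]] by simp
  qed
qed

lemma colon_key:
  assumes nu: "ks \<nu> \<subseteq> {..<n}" and n: "0 < n" and md: "1 \<le> m * d"
  shows "(\<forall>i<n. \<exists>\<mu>\<in>Ver n (\<lambda>i. m * a i) (m * d). dvdm \<mu> (sg i 1 + \<nu>))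
     \<longleftrightarrow> (\<exists>\<mu>\<in>Ver n (\<lambda>i. m * a i) (m * d) \<union> SocS n a d m. dvdm \<mu> \<nu>)"
proof
  assume H: "\<forall>i<n. \<exists>\<mu>\<in>Ver n (\<lambda>i. m * a i) (m * d). dvdm \<mu> (sg i 1 + \<nu>)"
  have H'': "m * d \<le> (\<Sum>j<n. min (lk (sg i 1 + \<nu>) j) (m * a j))" if i: "i < n" for i
  proof -
    obtain \<mu> where "\<mu> \<in> Ver n (\<lambda>i. m * a i) (m * d)" "dvdm \<mu> (sg i 1 + \<nu>)" using H i by blast
    then show ?thesis using ver_up[OF ks_ei[OF i nu], of "\<lambda>i. m * a i" "m * d"] by blast
  qed
  then have H': "\<forall>i<n. m * d \<le> (\<Sum>j<n. min (lk (sg i 1 + \<nu>) j) (m * a j))" by blast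
  show "\<exists>\<mu>\<in>Ver n (\<lambda>i. m * a i) (m * d) \<union> SocS n a d m. dvdm \<mu> \<nu>"
  proof (cases "m * d \<le> (\<Sum>j<n. min (lk \<nu> j) (m * a j))")
    case True
    then show ?thesis using ver_up[OF nu, of "\<lambda>i. m * a i" "m * d"] by blast
  next
    case False
    have lt: "\<forall>j<n. lk \<nu> j < m * a j"
    proof (intro allI impI, rule ccontr)
      fix i assume i: "i < n" and "\<not> lk \<nu> i < m * a i"
      then have "(\<Sum>j<n. min (lk (sg i 1 + \<nu>) j) (m * a j)) = (\<Sum>j<n. min (lk \<nu> j) (m * a j))"
        by (intro F_ei_eq) simp
      then show False using H''[OF i] False by linarith
    qed
    have "m * d \<le> (\<Sum>j<n. min (lk \<nu> j) (m * a j)) + 1"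
      using H''[OF n] F_ei_le[OF n, of \<nu> "\<lambda>j. m * a j"] by linarith
    then have "mdeg \<nu> = m * d - 1" using False F_all[OF lt nu] by linarith
    then have "\<nu> \<in> SocS n a d m" using lt nu by (simp add: SocS_def)
    then show ?thesis by (blast intro: up_self)
  qed
next
  assume "\<exists>\<mu>\<in>Ver n (\<lambda>i. m * a i) (m * d) \<union> SocS n a d m. dvdm \<mu> \<nu>"
  then obtain \<mu> where \<mu>: "\<mu> \<in> Ver n (\<lambda>i. m * a i) (m * d) \<union> SocS n a d m" "dvdm \<mu> \<nu>" by blast
  show "\<forall>i<n. \<exists>\<mu>\<in>Ver n (\<lambda>i. m * a i) (m * d). dvdm \<mu> (sg i 1 + \<nu>)"
  proof (intro allI impI)
    fix i assume i: "i < n"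
    show "\<exists>\<mu>\<in>Ver n (\<lambda>i. m * a i) (m * d). dvdm \<mu> (sg i 1 + \<nu>)"
    proof (cases "\<mu> \<in> Ver n (\<lambda>i. m * a i) (m * d)")
      case True
      then show ?thesis using dvdm_add[OF \<mu>(2), of "sg i 1"] by blast
    next
      case False
      then have w: "\<mu> \<in> SocS n a d m" using \<mu>(1) by blast
      then have w': "ks \<mu> \<subseteq> {..<n}" "mdeg \<mu> = m * d - 1" "\<forall>i<n. lk \<mu> i < m * a i"
        by (simp_all add: SocS_def)
      have "\<forall>i<n. \<exists>\<mu>'\<in>Ver n (\<lambda>i. m * a i) (m * d). dvdm \<mu>' (sg i 1 + \<mu>)"
        using soc_key[OF w'(1,2) md, of a] w'(3) by blast
      then obtain \<mu>' where "\<mu>' \<in> Ver n (\<lambda>i. m * a i) (m * d)" "dvdm \<mu>' (sg i 1 + \<mu>)" using i by blast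
      moreover have "dvdm (sg i 1 + \<mu>) (sg i 1 + \<nu>)" using \<mu>(2) by (simp add: dvdm_add2)
      ultimately show ?thesis by (meson dvdm_trans)
    qed
  qed
qed

lemma lookup_monom_mult:
  "lk (monom e * f :: 'k::field mpoly) \<kappa> = (\<Sum>\<nu>\<in>ks f. if e + \<nu> = \<kappa> then lk f \<nu> else 0)"
proof -
  have "monom e * f = monom e * (\<Sum>\<nu>\<in>ks f. sg \<nu> (lk f \<nu>))" by (subst poly_expand[of f]) (rule refl)
  also have "\<dots> = (\<Sum>\<nu>\<in>ks f. sg (e + \<nu>) (lk f \<nu>))"
    by (simp add: sum_distrib_left monom_def mult_single)
  finally show ?thesis by (simp add: lookup_sum lookup_single when_def)
qed

lemma keys_monom_mult: "ks (monom e * f :: 'k::field mpoly) = (\<lambda>\<nu>. e + \<nu>) ` ks f"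
proof (intro set_eqI iffI)
  fix \<kappa> assume "\<kappa> \<in> ks (monom e * f)"
  then have "(\<Sum>\<nu>\<in>ks f. if e + \<nu> = \<kappa> then lk f \<nu> else 0) \<noteq> 0"
    by (simp add: in_keys_iff lookup_monom_mult)
  then obtain \<nu> where "\<nu> \<in> ks f" "(if e + \<nu> = \<kappa> then lk f \<nu> else 0) \<noteq> 0"
    by (rule sum.not_neutral_contains_not_neutral)
  then have "\<nu> \<in> ks f" "e + \<nu> = \<kappa>" by (simp_all split: if_splits)
  then show "\<kappa> \<in> (\<lambda>\<nu>. e + \<nu>) ` ks f" by blast
next
  fix \<kappa> assume "\<kappa> \<in> (\<lambda>\<nu>. e + \<nu>) ` ks f"
  then obtain \<nu> where \<nu>: "\<nu> \<in> ks f" "\<kappa> = e + \<nu>" by blast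
  have "(\<Sum>\<nu>'\<in>ks f. if e + \<nu>' = \<kappa> then lk f \<nu>' else 0) = (\<Sum>\<nu>'\<in>ks f. if \<nu>' = \<nu> then lk f \<nu>' else 0)"
    using \<nu>(2) by (intro sum.cong) auto
  also have "\<dots> = lk f \<nu>" using \<nu>(1) by simp
  finally have "lk (monom e * f) \<kappa> = lk f \<nu>" by (simp only: lookup_monom_mult)
  then show "\<kappa> \<in> ks (monom e * f)"
    using \<nu>(1) by (simp add: in_keys_iff)
qed

lemma var_polyring: "i < n \<Longrightarrow> (var i :: 'k::field mpoly) \<in> polyring n"
  unfolding var_def by (rule monom_polyring) simp

lemma var_mult_MI:
  assumes "f \<in> polyring n" "i < n"
  shows "(var i * f :: 'k::field mpoly) \<in> MI n M \<longleftrightarrow> (\<forall>\<nu>\<in>ks f. \<exists>\<mu>\<in>M. dvdm \<mu> (sg i 1 + \<nu>))"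
proof -
  have "var i * f \<in> polyring n" using assms var_polyring polyring_mult by blast
  moreover have "ks (var i * f :: 'k mpoly) = (\<lambda>\<nu>. sg i 1 + \<nu>) ` ks f"
    unfolding var_def by (rule keys_monom_mult)
  ultimately show ?thesis unfolding MI_def by auto
qed

lemma colon_MI:
  assumes n: "0 < n" and md: "1 \<le> m * d"
  shows "colon_max n (MI n (Ver n (\<lambda>i. m * a i) (m * d)) :: 'k::field mpoly set)
       = MI n (Ver n (\<lambda>i. m * a i) (m * d) \<union> SocS n a d m)"
proof (intro set_eqI)
  fix f :: "'k mpoly"
  show "f \<in> colon_max n (MI n (Ver n (\<lambda>i. m * a i) (m * d))) \<longleftrightarrow> f \<in> MI n (Ver n (\<lambda>i. m * a i) (m * d) \<union> SocS n a d m)"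
  proof (cases "f \<in> polyring n")
    case True
    have "f \<in> colon_max n (MI n (Ver n (\<lambda>i. m * a i) (m * d))) \<longleftrightarrow>
        (\<forall>i<n. \<forall>\<nu>\<in>ks f. \<exists>\<mu>\<in>Ver n (\<lambda>i. m * a i) (m * d). dvdm \<mu> (sg i 1 + \<nu>))"
      using True by (simp add: colon_max_def var_mult_MI)
    also have "\<dots> \<longleftrightarrow> (\<forall>\<nu>\<in>ks f. \<forall>i<n. \<exists>\<mu>\<in>Ver n (\<lambda>i. m * a i) (m * d). dvdm \<mu> (sg i 1 + \<nu>))"
      by blast
    also have "\<dots> \<longleftrightarrow> (\<forall>\<nu>\<in>ks f. \<exists>\<mu>\<in>Ver n (\<lambda>i. m * a i) (m * d) \<union> SocS n a d m. dvdm \<mu> \<nu>)"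
      using colon_key[OF keys_polyringD[OF True] n md] by blast
    finally show ?thesis using True by (simp add: MI_def)
  next
    case False
    then show ?thesis by (simp add: colon_max_def MI_def)
  qed
qed

lemma soc_MI:
  assumes md: "1 \<le> m * d"
  shows "soc_ideal n d (veronese_ideal n a d) m = (MI n (SocS n a d m) :: 'k::field mpoly set)"
proof -
  have "{monom w | w. ks w \<subseteq> {..<n} \<and> mdeg w = m * d - 1 \<and>
          (\<forall>i<n. var i * monom w \<in> (ideal_pow n (veronese_ideal n a d) m :: 'k mpoly set))}
      = monom ` SocS n a d m"
  proof -
    have "(\<forall>i<n. var i * monom w \<in> (ideal_pow n (veronese_ideal n a d) m :: 'k mpoly set))
        \<longleftrightarrow> (\<forall>i<n. lk w i < m * a i)" if w: "ks w \<subseteq> {..<n}" "mdeg w = m * d - 1" for w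
    proof -
      have "(\<forall>i<n. var i * monom w \<in> (ideal_pow n (veronese_ideal n a d) m :: 'k mpoly set))
          \<longleftrightarrow> (\<forall>i<n. \<exists>\<mu>\<in>Ver n (\<lambda>i. m * a i) (m * d). dvdm \<mu> (sg i 1 + w))"
      proof -
        have "var i * monom w \<in> (ideal_pow n (veronese_ideal n a d) m :: 'k mpoly set)
            \<longleftrightarrow> (\<exists>\<mu>\<in>Ver n (\<lambda>i. m * a i) (m * d). dvdm \<mu> (sg i 1 + w))" if i: "i < n" for i
        proof -
          have "(var i * monom w :: 'k mpoly) = monom (sg i 1 + w)" by (simp add: var_def monom_def mult_single)
          then show ?thesis using ks_ei[OF i w(1)] by (simp add: pow_MI monom_in_MI)
        qed
        then show ?thesis by blast
      qed
      also have "\<dots> \<longleftrightarrow> (\<forall>i<n. lk w i < m * a i)" by (rule soc_key[OF w md])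
      finally show ?thesis .
    qed
    then show ?thesis by (auto simp: SocS_def)
  qed
  note eqS = this
  show ?thesis unfolding soc_ideal_def eqS by (rule ideal_gen_monom_eq[OF SocS_inS])
qed


lemma sum_minus_one:
  fixes f :: "nat \<Rightarrow> nat"
  assumes "\<forall>i\<in>A. 1 \<le> f i" "finite A"
  shows "(\<Sum>i\<in>A. f i - 1) + card A = sum f A"
proof -
  have "(\<Sum>i\<in>A. f i - 1 + 1) = (\<Sum>i\<in>A. f i - 1) + (\<Sum>i\<in>A. 1)" by (rule sum.distrib)
  then have "(\<Sum>i\<in>A. f i - 1) + card A = (\<Sum>i\<in>A. f i - 1 + 1)" by simp
  also have "\<dots> = sum f A" using assms(1) by (intro sum.cong) auto
  finally show ?thesis .
qed

lemma core_arith1: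
  fixes x A j k :: nat
  assumes "x \<le> (j + k) * A"
  shows "(j + k) * (x - j * A) \<le> k * x"
proof (cases "j * A \<le> x")
  case True
  have "x - j * A \<le> k * A" using assms by (simp add: algebra_simps)
  then have "j * (x - j * A) \<le> j * (k * A)" by simp
  then have "(j + k) * (x - j * A) \<le> j * (k * A) + k * (x - j * A)" by (simp add: algebra_simps)
  also have "\<dots> = k * x" using True by (simp add: algebra_simps)
  finally show ?thesis .
qed simp

lemma core1:
  assumes apos: "\<forall>i<n. 0 < a i" and k: "1 \<le> k" "k \<le> m" and d: "0 < d"
    and C3: "\<forall>A\<subseteq>{..<n}. d < sum a A \<longrightarrow> card A - 1 \<le> k * (sum a A - d)"
    and w: "w \<in> SocS n a d m"
  shows "\<exists>\<mu>1\<in>Ver n (\<lambda>i. (m - k) * a i) ((m - k) * d). \<exists>\<mu>2\<in>SocS n a d k. \<mu>1 + \<mu>2 = w"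
proof -
  have kw: "ks w \<subseteq> {..<n}" and sw: "(\<Sum>i<n. lk w i) = m * d - 1" and bw: "\<forall>i<n. lk w i < m * a i"
    using w mdeg_eq[of w n] by (auto simp: SocS_def)
  have mk: "\<And>i. m * a i = (m - k) * a i + k * a i" using k by (simp add: add_mult_distrib[symmetric])
  have md: "m * d = (m - k) * d + k * d" using k by (simp add: add_mult_distrib[symmetric])
  have kd: "1 \<le> k * d" using k d by simp
  have ka: "\<forall>i<n. 1 \<le> k * a i" using k apos by (simp add: Suc_le_eq)
  define l where "l i = lk w i - (m - k) * a i" for i
  define u where "u i = min (lk w i) (k * a i - 1)" for i
  define t where "t = k * d - 1"
  have lu: "\<forall>i\<in>{..<n}. l i \<le> u i"
  proof
    fix i assume "i \<in> {..<n}"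
    then have "lk w i < (m - k) * a i + k * a i" using bw mk by simp
    then show "l i \<le> u i" by (simp add: l_def u_def)
  qed
  have "m * sum l {..<n} \<le> k * (\<Sum>i<n. lk w i)"
  proof -
    have "\<forall>i\<in>{..<n}. m * l i \<le> k * lk w i"
    proof
      fix i assume "i \<in> {..<n}"
      then have "lk w i \<le> ((m - k) + k) * a i" using bw k by (simp add: less_imp_le)
      then have "((m - k) + k) * (lk w i - (m - k) * a i) \<le> k * lk w i" by (rule core_arith1)
      then show "m * l i \<le> k * lk w i" using k by (simp add: l_def)
    qed
    then have "(\<Sum>i<n. m * l i) \<le> (\<Sum>i<n. k * lk w i)" by (intro sum_mono) auto
    then show ?thesis by (simp add: sum_distrib_left)
  qed
  then have mS: "m * sum l {..<n} \<le> k * (m * d - 1)" using sw by simp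
  have sl: "sum l {..<n} \<le> t"
  proof (rule ccontr)
    assume "\<not> sum l {..<n} \<le> t"
    then have "k * d \<le> sum l {..<n}" using kd by (simp add: t_def)
    then have "m * (k * d) \<le> m * sum l {..<n}" by simp
    also have "\<dots> \<le> k * (m * d - 1)" by (rule mS)
    also have "\<dots> < k * (m * d)" using k kd md by (simp add: diff_mult_distrib2)
    finally show False by (simp add: algebra_simps)
  qed
  define B where "B = {i\<in>{..<n}. k * a i - 1 \<le> lk w i}"
  have Bsub: "B \<subseteq> {..<n}" by (auto simp: B_def)
  have finB: "finite B" using Bsub finite_subset by blast
  have su_split: "sum u {..<n} = (\<Sum>i\<in>B. k * a i - 1) + (\<Sum>i\<in>{..<n} - B. lk w i)"
  proof -
    have "sum u {..<n} = sum u ({..<n} - B) + sum u B" by (rule sum.subset_diff[OF Bsub]) simp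
    also have "sum u B = (\<Sum>i\<in>B. k * a i - 1)" by (intro sum.cong) (auto simp: u_def B_def)
    also have "sum u ({..<n} - B) = (\<Sum>i\<in>{..<n} - B. lk w i)" by (intro sum.cong) (auto simp: u_def B_def)
    finally show ?thesis by simp
  qed
  have sw_split: "(\<Sum>i<n. lk w i) = (\<Sum>i\<in>B. lk w i) + (\<Sum>i\<in>{..<n} - B. lk w i)"
    using sum.subset_diff[OF Bsub, of "lk w"] by simp
  have KB: "(\<Sum>i\<in>B. k * a i - 1) + card B = k * sum a B"
    using sum_minus_one[of B "\<lambda>i. k * a i"] ka Bsub finB by (auto simp: sum_distrib_left)
  have su: "t \<le> sum u {..<n}"
  proof (cases "d < sum a B")
    case True
    then have c: "card B - 1 \<le> k * (sum a B - d)" using C3 Bsub by blast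
    have "B \<noteq> {}" using True by auto
    then have "1 \<le> card B" using finB by (simp add: Suc_le_eq card_gt_0_iff)
    have "k * sum a B = k * d + k * (sum a B - d)" using True by (simp add: add_mult_distrib2[symmetric])
    then have "t \<le> (\<Sum>i\<in>B. k * a i - 1)" using KB c \<open>1 \<le> card B\<close> kd by (simp add: t_def)
    then show ?thesis using su_split by simp
  next
    case False
    have "(\<Sum>i\<in>B. lk w i) \<le> (\<Sum>i\<in>B. k * a i - 1 + (m - k) * a i)"
    proof (intro sum_mono)
      fix i assume "i \<in> B"
      then have "i < n" using Bsub by auto
      then have "lk w i < (m - k) * a i + k * a i" using bw mk by simp
      then show "lk w i \<le> k * a i - 1 + (m - k) * a i" by simp
    qed
    also have "\<dots> = (\<Sum>i\<in>B. k * a i - 1) + (m - k) * sum a B" by (simp add: sum.distrib sum_distrib_left)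
    also have "\<dots> \<le> (\<Sum>i\<in>B. k * a i - 1) + (m - k) * d" using False by simp
    finally have "(\<Sum>i\<in>B. lk w i) \<le> (\<Sum>i\<in>B. k * a i - 1) + (m - k) * d" .
    then show ?thesis using su_split sw_split sw md kd by (simp add: t_def)
  qed
  obtain v where v: "\<forall>i\<in>{..<n}. l i \<le> v i \<and> v i \<le> u i" "sum v {..<n} = t"
    using split_sum[OF _ lu sl su] by auto
  define \<mu>2 where "\<mu>2 = mk n v"
  define \<mu>1 where "\<mu>1 = w - \<mu>2"
  have d2: "dvdm \<mu>2 w" using v kw by (auto simp: dvdm_def \<mu>2_def lk_mk u_def)
  have e: "\<mu>1 + \<mu>2 = w" unfolding \<mu>1_def using dvdm_minus_add[OF d2] .
  have v2: "\<mu>2 \<in> SocS n a d k"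
  proof -
    have "\<forall>i<n. v i < k * a i"
    proof (intro allI impI)
      fix i assume "i < n"
      then have "v i \<le> k * a i - 1" using v(1) by (auto simp: u_def)
      then show "v i < k * a i" using ka \<open>i < n\<close> by (meson diff_less le_less_trans zero_less_one not_less_eq_eq le_imp_less_Suc Suc_le_eq)
    qed
    then show ?thesis using v(2) by (simp add: SocS_def \<mu>2_def ks_mk mdeg_mk lk_mk t_def)
  qed
  have k1: "ks \<mu>1 \<subseteq> {..<n}" using kw keys_minus_sub[of w \<mu>2] by (auto simp: \<mu>1_def)
  have "mdeg w = mdeg \<mu>1 + mdeg \<mu>2" using e k1 ks_mk[of n v] by (metis \<mu>2_def mdeg_add)
  moreover have "mdeg w = m * d - 1" "mdeg \<mu>2 = k * d - 1" using w v2 by (simp_all add: SocS_def)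
  ultimately have "mdeg \<mu>1 = (m - k) * d" using md kd by arith
  moreover have "\<forall>i<n. lk \<mu>1 i \<le> (m - k) * a i"
  proof (intro allI impI)
    fix i assume "i < n"
    then have "lk w i - (m - k) * a i \<le> v i" using v(1) by (auto simp: l_def)
    then show "lk \<mu>1 i \<le> (m - k) * a i" using \<open>i < n\<close> by (simp add: \<mu>1_def \<mu>2_def lookup_minus lk_mk)
  qed
  ultimately have v1: "\<mu>1 \<in> Ver n (\<lambda>i. (m - k) * a i) ((m - k) * d)" using k1 by (simp add: Ver_def)
  show ?thesis using v1 v2 e by blast
qed

lemma core2:
  assumes apos: "\<forall>i<n. 0 < a i" and k: "1 \<le> k" and d: "0 < d"
    and A: "A \<subseteq> {..<n}" "d < sum a A" "\<not> card A - 1 \<le> k * (sum a A - d)"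
  shows "\<exists>m\<ge>k. \<exists>w\<in>SocS n a d m. \<not> (\<exists>\<mu>1\<in>Ver n (\<lambda>i. (m - k) * a i) ((m - k) * d).
            \<exists>\<mu>2\<in>SocS n a d k. dvdm (\<mu>1 + \<mu>2) w)"
proof -
  define m where "m = k + card A"
  have finA: "finite A" using A(1) finite_subset by blast
  have m1: "1 \<le> m" using k by (simp add: m_def)
  have ma: "\<forall>i\<in>A. 1 \<le> m * a i" using A(1) apos m1 by (auto simp: Suc_le_eq)
  have Sm: "(\<Sum>i\<in>A. m * a i - 1) + card A = m * sum a A"
    using sum_minus_one[OF ma finA] by (simp add: sum_distrib_left)
  have "m * sum a A = m * d + m * (sum a A - d)" using A(2) by (simp add: add_mult_distrib2[symmetric])
  moreover have "m * 1 \<le> m * (sum a A - d)" by (rule mult_le_mono2) (use A(2) in simp)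
  moreover have "card A \<le> m" by (simp add: m_def)
  ultimately have "m * d - 1 \<le> (\<Sum>i\<in>A. m * a i - 1)" using Sm by linarith
  then obtain x where x: "\<forall>i\<in>A. 0 \<le> x i \<and> x i \<le> m * a i - 1" "sum x A = m * d - 1"
    using split_sum[of A "\<lambda>_. 0" "\<lambda>i. m * a i - 1" "m * d - 1"] finA by auto
  define w where "w = mk n (\<lambda>i. if i \<in> A then x i else 0)"
  have kw: "ks w \<subseteq> {..<n}" by (simp add: w_def ks_mk)
  have "mdeg w = (\<Sum>i<n. if i \<in> A then x i else 0)" by (simp add: w_def mdeg_mk)
  also have "\<dots> = sum x ({..<n} \<inter> A)" by (simp add: sum.inter_restrict)
  also have "{..<n} \<inter> A = A" using A(1) by blast
  finally have dw: "mdeg w = m * d - 1" using x(2) by simp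
  have bw: "\<forall>i<n. lk w i < m * a i"
  proof (intro allI impI)
    fix i assume i: "i < n"
    have 1: "1 \<le> m * a i" using apos m1 i by (simp add: Suc_le_eq)
    show "lk w i < m * a i"
    proof (cases "i \<in> A")
      case True
      then have "x i \<le> m * a i - 1" using x(1) by blast
      then have "x i < m * a i" using 1 by linarith
      then show ?thesis using True i by (simp add: w_def lk_mk)
    next
      case False
      then show ?thesis using 1 i by (simp add: w_def lk_mk)
    qed
  qed
  have wS: "w \<in> SocS n a d m" using kw dw bw by (simp add: SocS_def)
  have "\<not> (\<exists>\<mu>1\<in>Ver n (\<lambda>i. (m - k) * a i) ((m - k) * d). \<exists>\<mu>2\<in>SocS n a d k. dvdm (\<mu>1 + \<mu>2) w)"
  proof
    assume "\<exists>\<mu>1\<in>Ver n (\<lambda>i. (m - k) * a i) ((m - k) * d). \<exists>\<mu>2\<in>SocS n a d k. dvdm (\<mu>1 + \<mu>2) w"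
    then obtain \<mu>1 \<mu>2 where \<mu>2: "\<mu>2 \<in> SocS n a d k" and dv: "dvdm (\<mu>1 + \<mu>2) w" by blast
    have "dvdm \<mu>2 (\<mu>1 + \<mu>2)" using dvdm_add[of \<mu>2 \<mu>2 \<mu>1] by simp
    then have d2: "dvdm \<mu>2 w" using dv dvdm_trans by blast
    have k2: "ks \<mu>2 \<subseteq> {..<n}" and deg2: "mdeg \<mu>2 = k * d - 1" and b2: "\<forall>i<n. lk \<mu>2 i < k * a i"
      using \<mu>2 by (auto simp: SocS_def)
    have z: "\<forall>i\<in>{..<n} - A. lk \<mu>2 i = 0"
    proof
      fix i assume i: "i \<in> {..<n} - A"
      have "lk \<mu>2 i \<le> lk w i" using d2 by (simp add: dvdm_def)
      also have "lk w i = 0" using i by (simp add: w_def lk_mk)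
      finally show "lk \<mu>2 i = 0" by simp
    qed
    have "k * d - 1 = (\<Sum>i<n. lk \<mu>2 i)" using deg2 mdeg_eq[OF k2] by simp
    also have "\<dots> = (\<Sum>i\<in>A. lk \<mu>2 i)"
      using z A(1) by (intro sum.mono_neutral_right) auto
    also have "\<dots> \<le> (\<Sum>i\<in>A. k * a i - 1)"
      using b2 A(1) by (intro sum_mono) (auto simp: less_Suc_eq_le[symmetric])
    finally have le: "k * d - 1 \<le> (\<Sum>i\<in>A. k * a i - 1)" .
    have ka: "\<forall>i\<in>A. 1 \<le> k * a i" using A(1) apos k by (auto simp: Suc_le_eq)
    have "(\<Sum>i\<in>A. k * a i - 1) + card A = k * sum a A"
      using sum_minus_one[OF ka finA] by (simp add: sum_distrib_left)
    moreover have "k * sum a A = k * d + k * (sum a A - d)" using A(2) by (simp add: add_mult_distrib2[symmetric])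
    moreover have "1 \<le> k * d" using k d by simp
    ultimately show False using le A(3) by linarith
  qed
  moreover have "m \<ge> k" by (simp add: m_def)
  ultimately show ?thesis using wS by blast
qed


definition restr :: "((nat \<Rightarrow>\<^sub>0 nat) \<Rightarrow> bool) \<Rightarrow> 'k::field mpoly \<Rightarrow> 'k mpoly" where
  "restr P f = Abs_poly_mapping (\<lambda>\<nu>. if P \<nu> then lk f \<nu> else 0)"

lemma lk_restr: "lk (restr P f) \<nu> = (if P \<nu> then lk f \<nu> else 0)"
proof -
  have "finite {\<nu>. (if P \<nu> then lk f \<nu> else 0) \<noteq> 0}"
    by (rule finite_subset[of _ "ks f"]) (auto simp: in_keys_iff split: if_splits)
  then show ?thesis unfolding restr_def by simp
qed

lemma ks_restr: "ks (restr P f) = {\<nu>\<in>ks f. P \<nu>}"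
  by (auto simp: in_keys_iff lk_restr split: if_splits)

lemma restr_split: "f = restr (\<lambda>\<nu>. \<not> P \<nu>) f + restr P f"
  by (rule poly_mapping_eqI) (simp add: lookup_add lk_restr)

lemma restr_polyring: "f \<in> polyring n \<Longrightarrow> restr P f \<in> polyring n"
  by (simp add: polyring_iff ks_restr)

lemma MI_empty: "MI n {} = {0}"
  by (auto simp: MI_def)

lemma MI_eq_zero_iff:
  assumes "M \<subseteq> {\<mu>. ks \<mu> \<subseteq> {..<n}}"
  shows "(MI n M :: 'k::field mpoly set) = {0} \<longleftrightarrow> M = {}"
proof
  assume H: "(MI n M :: 'k::field mpoly set) = {0}"
  show "M = {}"
  proof (rule ccontr)
    assume "M \<noteq> {}"
    then obtain w where w: "w \<in> M" by blast
    then have "(monom w :: 'k mpoly) \<in> MI n M" using assms by (auto simp: monom_in_MI intro: up_self)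
    moreover have "(monom w :: 'k mpoly) \<noteq> 0"
    proof
      assume "(monom w :: 'k mpoly) = 0"
      then have "ks (monom w :: 'k mpoly) = {}" by simp
      then show False by simp
    qed
    ultimately show False using H by blast
  qed
qed (simp add: MI_empty)

lemma socS_nonempty:
  assumes apos: "\<forall>i<n. 0 < a i" and dpos: "0 < d" and big: "(\<Sum>i<n. a i) > d" and m: "1 \<le> m"
  shows "SocS n a d m \<noteq> {} \<longleftrightarrow> n - 1 \<le> m * ((\<Sum>i<n. a i) - d)"
proof -
  let ?s = "\<Sum>i<n. a i"
  have ma: "\<forall>i\<in>{..<n}. 1 \<le> m * a i" using apos m by (auto simp: Suc_le_eq)
  have Sm: "(\<Sum>i<n. m * a i - 1) + n = m * ?s"
    using sum_minus_one[OF ma] by (simp add: sum_distrib_left)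
  have ms: "m * ?s = m * d + m * (?s - d)" using big by (simp add: add_mult_distrib2[symmetric])
  have md: "1 \<le> m * d" using m dpos by simp
  have n: "0 < n" using big by (cases n) auto
  show ?thesis
  proof
    assume "SocS n a d m \<noteq> {}"
    then obtain w where w: "w \<in> SocS n a d m" by blast
    then have "(\<Sum>i<n. lk w i) = m * d - 1" using mdeg_eq[of w n] by (simp add: SocS_def)
    moreover have "(\<Sum>i<n. lk w i) \<le> (\<Sum>i<n. m * a i - 1)"
      using w by (intro sum_mono) (auto simp: SocS_def less_Suc_eq_le[symmetric])
    ultimately show "n - 1 \<le> m * (?s - d)" using Sm ms md by linarith
  next
    assume H: "n - 1 \<le> m * (?s - d)"
    then have "m * d - 1 \<le> (\<Sum>i<n. m * a i - 1)" using Sm ms md n by linarith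
    then obtain x where x: "\<forall>i\<in>{..<n}. 0 \<le> x i \<and> x i \<le> m * a i - 1" "sum x {..<n} = m * d - 1"
      using split_sum[of "{..<n}" "\<lambda>_. 0" "\<lambda>i. m * a i - 1" "m * d - 1"] by auto
    have "\<forall>i<n. x i < m * a i"
    proof (intro allI impI)
      fix i assume i: "i < n"
      then have "x i \<le> m * a i - 1" "1 \<le> m * a i" using x(1) ma by auto
      then show "x i < m * a i" by linarith
    qed
    then have "mk n x \<in> SocS n a d m" using x(2) by (simp add: SocS_def ks_mk mdeg_mk lk_mk)
    then show "SocS n a d m \<noteq> {}" by blast
  qed
qed

lemma E2_iff:
  assumes n: "0 < n" and apos: "\<forall>i<n. 0 < a i" and dpos: "0 < d" and k: "1 \<le> k"
  shows "(\<forall>m\<ge>k. soc_ideal n d (veronese_ideal n a d) m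
            \<subseteq> ideal_prod n (ideal_pow n (veronese_ideal n a d) (m - k)) (soc_ideal n d (veronese_ideal n a d) k :: 'k::field mpoly set))
     \<longleftrightarrow> (\<forall>A\<subseteq>{..<n}. d < sum a A \<longrightarrow> card A - 1 \<le> k * (sum a A - d))"
    (is "?E \<longleftrightarrow> ?C")
proof -
  have eq: "soc_ideal n d (veronese_ideal n a d) m
            \<subseteq> ideal_prod n (ideal_pow n (veronese_ideal n a d) (m - k)) (soc_ideal n d (veronese_ideal n a d) k :: 'k mpoly set)
       \<longleftrightarrow> (MI n (SocS n a d m) :: 'k mpoly set) \<subseteq> MI n {\<mu>1 + \<mu>2 | \<mu>1 \<mu>2. \<mu>1 \<in> Ver n (\<lambda>i. (m - k) * a i) ((m - k) * d) \<and> \<mu>2 \<in> SocS n a d k}"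
    if m: "m \<ge> k" for m
  proof -
    have "1 \<le> m * d" "1 \<le> k * d" using m k dpos by (simp_all add: Suc_le_eq)
    then show ?thesis by (simp add: soc_MI pow_MI MI_prod[OF Ver_inS SocS_inS])
  qed
  show ?thesis
  proof
    assume C: ?C
    show ?E
    proof (intro allI impI)
      fix m assume m: "k \<le> m"
      have "(MI n (SocS n a d m) :: 'k mpoly set) \<subseteq> MI n {\<mu>1 + \<mu>2 | \<mu>1 \<mu>2. \<mu>1 \<in> Ver n (\<lambda>i. (m - k) * a i) ((m - k) * d) \<and> \<mu>2 \<in> SocS n a d k}"
      proof (rule MI_mono)
        fix \<nu> assume "\<exists>\<mu>\<in>SocS n a d m. dvdm \<mu> \<nu>"
        then obtain w where w: "w \<in> SocS n a d m" "dvdm w \<nu>" by blast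
        obtain \<mu>1 \<mu>2 where "\<mu>1 \<in> Ver n (\<lambda>i. (m - k) * a i) ((m - k) * d)" "\<mu>2 \<in> SocS n a d k" "\<mu>1 + \<mu>2 = w"
          using core1[OF apos k m dpos C w(1)] by blast
        then show "\<exists>\<mu>\<in>{\<mu>1 + \<mu>2 | \<mu>1 \<mu>2. \<mu>1 \<in> Ver n (\<lambda>i. (m - k) * a i) ((m - k) * d) \<and> \<mu>2 \<in> SocS n a d k}. dvdm \<mu> \<nu>"
          using w(2) by blast
      qed
      then show "soc_ideal n d (veronese_ideal n a d) m
            \<subseteq> ideal_prod n (ideal_pow n (veronese_ideal n a d) (m - k)) (soc_ideal n d (veronese_ideal n a d) k :: 'k mpoly set)"
        using eq[OF m] by blast
    qed
  next
    assume E: ?E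
    show ?C
    proof (rule ccontr)
      assume "\<not> ?C"
      then obtain A where A: "A \<subseteq> {..<n}" "d < sum a A" "\<not> card A - 1 \<le> k * (sum a A - d)" by blast
      obtain m w where m: "m \<ge> k" and w: "w \<in> SocS n a d m"
        and bad: "\<not> (\<exists>\<mu>1\<in>Ver n (\<lambda>i. (m - k) * a i) ((m - k) * d). \<exists>\<mu>2\<in>SocS n a d k. dvdm (\<mu>1 + \<mu>2) w)"
        using core2[OF apos k dpos A] by blast
      have "(monom w :: 'k mpoly) \<in> MI n (SocS n a d m)"
        using w by (auto simp: monom_in_MI SocS_def intro: up_self)
      moreover have "(monom w :: 'k mpoly) \<notin> MI n {\<mu>1 + \<mu>2 | \<mu>1 \<mu>2. \<mu>1 \<in> Ver n (\<lambda>i. (m - k) * a i) ((m - k) * d) \<and> \<mu>2 \<in> SocS n a d k}"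
        using bad by (auto simp: monom_in_MI)
      ultimately show False using E m eq[OF m] by blast
    qed
  qed
qed

lemma E1_iff:
  assumes n: "0 < n" and apos: "\<forall>i<n. 0 < a i" and dpos: "0 < d" and k: "1 \<le> k"
  shows "(\<forall>m\<ge>k. colon_max n (ideal_pow n (veronese_ideal n a d) m) \<subseteq>
           {f + g | f g. f \<in> ideal_prod n (ideal_pow n (veronese_ideal n a d) (m - k)) (colon_max n (ideal_pow n (veronese_ideal n a d) k))
                        \<and> g \<in> (ideal_pow n (veronese_ideal n a d) m :: 'k::field mpoly set)})
     \<longleftrightarrow> (\<forall>A\<subseteq>{..<n}. d < sum a A \<longrightarrow> card A - 1 \<le> k * (sum a A - d))"
    (is "?E \<longleftrightarrow> ?C")
proof -
  define W where "W m = {\<mu>1 + \<mu>2 | \<mu>1 \<mu>2. \<mu>1 \<in> Ver n (\<lambda>i. (m - k) * a i) ((m - k) * d) \<and> \<mu>2 \<in> Ver n (\<lambda>i. k * a i) (k * d) \<union> SocS n a d k}" for m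
  have eq: "colon_max n (ideal_pow n (veronese_ideal n a d) m) \<subseteq>
           {f + g | f g. f \<in> ideal_prod n (ideal_pow n (veronese_ideal n a d) (m - k)) (colon_max n (ideal_pow n (veronese_ideal n a d) k))
                        \<and> g \<in> (ideal_pow n (veronese_ideal n a d) m :: 'k::field mpoly set)}
       \<longleftrightarrow> (MI n (Ver n (\<lambda>i. m * a i) (m * d) \<union> SocS n a d m) :: 'k mpoly set) \<subseteq>
           {f + g | f g. f \<in> MI n (W m) \<and> g \<in> MI n (Ver n (\<lambda>i. m * a i) (m * d))}"
    if m: "m \<ge> k" for m
  proof -
    have "1 \<le> m * d" "1 \<le> k * d" using m k dpos by (simp_all add: Suc_le_eq)
    moreover have "Ver n (\<lambda>i. k * a i) (k * d) \<union> SocS n a d k \<subseteq> {\<mu>. ks \<mu> \<subseteq> {..<n}}"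
      using Ver_inS SocS_inS by blast
    ultimately show ?thesis unfolding W_def
      by (simp add: pow_MI colon_MI[OF n] MI_prod[OF Ver_inS])
  qed
  show ?thesis
  proof
    assume C: ?C
    show ?E
    proof (intro allI impI)
      fix m assume m: "k \<le> m"
      have "(MI n (Ver n (\<lambda>i. m * a i) (m * d) \<union> SocS n a d m) :: 'k mpoly set) \<subseteq>
           {f + g | f g. f \<in> MI n (W m) \<and> g \<in> MI n (Ver n (\<lambda>i. m * a i) (m * d))}"
      proof
        fix f :: "'k mpoly" assume f: "f \<in> MI n (Ver n (\<lambda>i. m * a i) (m * d) \<union> SocS n a d m)"
        define P where "P \<nu> = (\<exists>\<mu>\<in>Ver n (\<lambda>i. m * a i) (m * d). dvdm \<mu> \<nu>)" for \<nu>
        have fp: "f \<in> polyring n" using f by (simp add: MI_def)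
        have "restr P f \<in> MI n (Ver n (\<lambda>i. m * a i) (m * d))"
          using restr_polyring[OF fp] by (auto simp: MI_def ks_restr P_def)
        moreover have "restr (\<lambda>\<nu>. \<not> P \<nu>) f \<in> MI n (W m)"
        proof -
          have "\<exists>\<mu>\<in>W m. dvdm \<mu> \<nu>" if \<nu>: "\<nu> \<in> ks f" "\<not> P \<nu>" for \<nu>
          proof -
            obtain \<mu> where \<mu>: "\<mu> \<in> Ver n (\<lambda>i. m * a i) (m * d) \<union> SocS n a d m" "dvdm \<mu> \<nu>"
              using f \<nu>(1) by (auto simp: MI_def)
            then have "\<mu> \<in> SocS n a d m" using \<nu>(2) by (auto simp: P_def)
            then obtain \<mu>1 \<mu>2 where "\<mu>1 \<in> Ver n (\<lambda>i. (m - k) * a i) ((m - k) * d)" "\<mu>2 \<in> SocS n a d k" "\<mu>1 + \<mu>2 = \<mu>"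
              using core1[OF apos k m dpos C] by blast
            then have "\<mu> \<in> W m" by (auto simp: W_def)
            then show ?thesis using \<mu>(2) by blast
          qed
          then show ?thesis using restr_polyring[OF fp] by (auto simp: MI_def ks_restr)
        qed
        ultimately show "f \<in> {f + g | f g. f \<in> MI n (W m) \<and> g \<in> MI n (Ver n (\<lambda>i. m * a i) (m * d))}"
          using restr_split[of f P] by blast
      qed
      then show "colon_max n (ideal_pow n (veronese_ideal n a d) m) \<subseteq>
           {f + g | f g. f \<in> ideal_prod n (ideal_pow n (veronese_ideal n a d) (m - k)) (colon_max n (ideal_pow n (veronese_ideal n a d) k))
                        \<and> g \<in> (ideal_pow n (veronese_ideal n a d) m :: 'k::field mpoly set)}"
        using eq[OF m] by blast
    qed
  next
    assume E: ?E
    show ?C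
    proof (rule ccontr)
      assume "\<not> ?C"
      then obtain A where A: "A \<subseteq> {..<n}" "d < sum a A" "\<not> card A - 1 \<le> k * (sum a A - d)" by blast
      obtain m w where m: "m \<ge> k" and w: "w \<in> SocS n a d m"
        and bad: "\<not> (\<exists>\<mu>1\<in>Ver n (\<lambda>i. (m - k) * a i) ((m - k) * d). \<exists>\<mu>2\<in>SocS n a d k. dvdm (\<mu>1 + \<mu>2) w)"
        using core2[OF apos k dpos A] by blast
      have kw: "ks w \<subseteq> {..<n}" and dw: "mdeg w = m * d - 1" using w by (auto simp: SocS_def)
      have md: "1 \<le> m * d" using m k dpos by (simp add: Suc_le_eq)
      have "(monom w :: 'k mpoly) \<in> MI n (Ver n (\<lambda>i. m * a i) (m * d) \<union> SocS n a d m)"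
        using w by (auto simp: monom_in_MI SocS_def intro: up_self)
      then obtain f g where fg: "(monom w :: 'k mpoly) = f + g" "f \<in> MI n (W m)" "g \<in> MI n (Ver n (\<lambda>i. m * a i) (m * d))"
        using E m eq[OF m] by blast
      have "lk (monom w :: 'k mpoly) w = 1" by (simp add: monom_def)
      then have "lk f w + lk g w = 1" using fg(1) by (simp add: lookup_add)
      then have "w \<in> ks f \<or> w \<in> ks g" by (auto simp: in_keys_iff)
      then show False
      proof
        assume "w \<in> ks g"
        then obtain \<mu> where \<mu>: "\<mu> \<in> Ver n (\<lambda>i. m * a i) (m * d)" "dvdm \<mu> w" using fg(3) by (auto simp: MI_def)
        have "mdeg \<mu> \<le> mdeg w" by (rule mdeg_mono[OF \<mu>(2) kw])
        moreover have "mdeg \<mu> = m * d" using \<mu>(1) by (simp add: Ver_def)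
        ultimately show False using md dw by linarith
      next
        assume "w \<in> ks f"
        then obtain \<mu>1 \<mu>2 where \<mu>: "\<mu>1 \<in> Ver n (\<lambda>i. (m - k) * a i) ((m - k) * d)"
            "\<mu>2 \<in> Ver n (\<lambda>i. k * a i) (k * d) \<union> SocS n a d k" "dvdm (\<mu>1 + \<mu>2) w"
        proof -
          obtain \<mu> where "\<mu> \<in> W m" "dvdm \<mu> w" using fg(2) \<open>w \<in> ks f\<close> unfolding MI_def by blast
          then show ?thesis using that unfolding W_def by blast
        qed
        show False
        proof (cases "\<mu>2 \<in> SocS n a d k")
          case True
          then show False using bad \<mu>(1,3) by blast
        next
          case False
          then have v2: "\<mu>2 \<in> Ver n (\<lambda>i. k * a i) (k * d)" using \<mu>(2) by blast
          have "mdeg (\<mu>1 + \<mu>2) = (m - k) * d + k * d"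
            using \<mu>(1) v2 mdeg_add[of \<mu>1 n \<mu>2] by (simp add: Ver_def)
          also have "\<dots> = m * d" using m by (simp add: add_mult_distrib[symmetric])
          finally have "mdeg (\<mu>1 + \<mu>2) = m * d" .
          moreover have "mdeg (\<mu>1 + \<mu>2) \<le> mdeg w" by (rule mdeg_mono[OF \<mu>(3) kw])
          ultimately show False using md dw by linarith
        qed
      qed
    qed
  qed
qed


lemma colon_sub_iff:
  assumes n: "0 < n" and m: "1 \<le> m" and dpos: "0 < d"
  shows "colon_max n (ideal_pow n (veronese_ideal n a d) m) \<subseteq> (ideal_pow n (veronese_ideal n a d) m :: 'k::field mpoly set)
     \<longleftrightarrow> SocS n a d m = {}"
proof -
  have md: "1 \<le> m * d" using m dpos by (simp add: Suc_le_eq)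
  have e: "colon_max n (ideal_pow n (veronese_ideal n a d) m) = (MI n (Ver n (\<lambda>i. m * a i) (m * d) \<union> SocS n a d m) :: 'k mpoly set)"
    "ideal_pow n (veronese_ideal n a d) m = (MI n (Ver n (\<lambda>i. m * a i) (m * d)) :: 'k mpoly set)"
    using colon_MI[OF n md] by (simp_all add: pow_MI)
  show ?thesis
  proof
    assume H: "colon_max n (ideal_pow n (veronese_ideal n a d) m) \<subseteq> (ideal_pow n (veronese_ideal n a d) m :: 'k::field mpoly set)"
    show "SocS n a d m = {}"
    proof (rule ccontr)
      assume "SocS n a d m \<noteq> {}"
      then obtain w where w: "w \<in> SocS n a d m" by blast
      have kw: "ks w \<subseteq> {..<n}" and dw: "mdeg w = m * d - 1" using w by (auto simp: SocS_def)
      have "(monom w :: 'k mpoly) \<in> MI n (Ver n (\<lambda>i. m * a i) (m * d) \<union> SocS n a d m)"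
        using w kw by (auto simp: monom_in_MI intro: up_self)
      then have "(monom w :: 'k mpoly) \<in> MI n (Ver n (\<lambda>i. m * a i) (m * d))" using H e by blast
      then obtain \<mu> where \<mu>: "\<mu> \<in> Ver n (\<lambda>i. m * a i) (m * d)" "dvdm \<mu> w" by (auto simp: monom_in_MI)
      have "mdeg \<mu> \<le> mdeg w" by (rule mdeg_mono[OF \<mu>(2) kw])
      moreover have "mdeg \<mu> = m * d" using \<mu>(1) by (simp add: Ver_def)
      ultimately show False using md dw by linarith
    qed
  next
    assume "SocS n a d m = {}"
    then show "colon_max n (ideal_pow n (veronese_ideal n a d) m) \<subseteq> (ideal_pow n (veronese_ideal n a d) m :: 'k::field mpoly set)"
      using e by simp
  qed
qed

lemma colon_sub_0:
  "colon_max n (ideal_pow n I 0) \<subseteq> ideal_pow n I 0"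
  by (auto simp: colon_max_def)

lemma all_eq_one: "(\<And>m. Q m \<longleftrightarrow> m = k) \<Longrightarrow> (\<forall>m. Q m \<longrightarrow> R m) \<longleftrightarrow> R k"
  by metis

lemma all_eq_one': "(\<And>m. 1 \<le> m \<Longrightarrow> Q m \<longleftrightarrow> m = k) \<Longrightarrow> (1::nat) \<le> k \<Longrightarrow> (\<forall>m\<ge>1. Q m \<longrightarrow> R m) \<longleftrightarrow> R k"
  by metis

theorem proposition3p8:
  fixes n d :: nat and a :: "nat \<Rightarrow> nat" and k0 :: nat
  assumes apos: "\<forall>i<n. 0 < a i"
    and dpos: "0 < d"
    and big: "(\<Sum>i<n. a i) > d"
    and k0_def: "k0 = (LEAST k. 0 < k \<and> k * ((\<Sum>i<n. a i) - d) \<ge> n - 1)"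
  shows "(Soc_equigen n (veronese_ideal n a d :: 'k::field mpoly set)
            \<longleftrightarrow> SocStar_equigen n d (veronese_ideal n a d :: 'k mpoly set))
       \<and> (SocStar_equigen n d (veronese_ideal n a d :: 'k mpoly set)
            \<longleftrightarrow> (\<forall>A \<subseteq> {..<n}. sum a A > d \<longrightarrow> k0 * (sum a A - d) \<ge> card A - 1))"
proof -
  let ?s = "\<Sum>i<n. a i"
  let ?I = "veronese_ideal n a d :: 'k mpoly set"
  define P where "P k = (0 < k \<and> k * (?s - d) \<ge> n - 1)" for k
  have n: "0 < n" using big by (cases n) auto
  have "P n"
  proof -
    have "n * 1 \<le> n * (?s - d)" by (rule mult_le_mono2) (use big in simp)
    then have "n - 1 \<le> n * (?s - d)" by linarith
    then show ?thesis using n by (simp add: P_def)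
  qed
  then have Pk0: "P k0" unfolding k0_def P_def by (rule LeastI)
  have k0le: "\<And>k. P k \<Longrightarrow> k0 \<le> k" unfolding k0_def P_def by (rule Least_le)
  have k1: "1 \<le> k0" using Pk0 by (simp add: P_def)
  have PS: "SocS n a d m \<noteq> {} \<longleftrightarrow> P m" if "1 \<le> m" for m
    using socS_nonempty[OF apos dpos big that] that by (auto simp: P_def)
  have least: "(P m0 \<and> (\<forall>i. 1 \<le> i \<and> i < m0 \<longrightarrow> \<not> P i)) \<longleftrightarrow> m0 = k0" for m0
  proof
    assume H: "P m0 \<and> (\<forall>i. 1 \<le> i \<and> i < m0 \<longrightarrow> \<not> P i)"
    then have "k0 \<le> m0" using k0le by blast
    moreover have "\<not> k0 < m0" using H Pk0 k1 by blast
    ultimately show "m0 = k0" by simp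
  next
    assume "m0 = k0"
    then show "P m0 \<and> (\<forall>i. 1 \<le> i \<and> i < m0 \<longrightarrow> \<not> P i)" using Pk0 k0le by (auto simp: not_le[symmetric])
  qed
  have Q1: "(\<not> colon_max n (ideal_pow n ?I m0) \<subseteq> ideal_pow n ?I m0 \<and>
           (\<forall>i<m0. colon_max n (ideal_pow n ?I i) \<subseteq> ideal_pow n ?I i)) \<longleftrightarrow> m0 = k0" for m0
  proof (cases "m0 = 0")
    case True
    then show ?thesis using colon_sub_0[of n ?I] k1 by auto
  next
    case False
    have a1: "(\<not> colon_max n (ideal_pow n ?I m0) \<subseteq> ideal_pow n ?I m0) \<longleftrightarrow> P m0"
      using colon_sub_iff[OF n _ dpos, of m0 a, where 'k='k] PS[of m0] False by simp
    have a2: "(\<forall>i<m0. colon_max n (ideal_pow n ?I i) \<subseteq> ideal_pow n ?I i) \<longleftrightarrow> (\<forall>i. 1 \<le> i \<and> i < m0 \<longrightarrow> \<not> P i)"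
    proof
      assume H: "\<forall>i<m0. colon_max n (ideal_pow n ?I i) \<subseteq> ideal_pow n ?I i"
      show "\<forall>i. 1 \<le> i \<and> i < m0 \<longrightarrow> \<not> P i"
      proof (intro allI impI)
        fix i assume i: "1 \<le> i \<and> i < m0"
        then have "colon_max n (ideal_pow n ?I i) \<subseteq> ideal_pow n ?I i" using H by blast
        then show "\<not> P i" using colon_sub_iff[OF n _ dpos, of i a, where 'k='k] PS[of i] i by simp
      qed
    next
      assume H: "\<forall>i. 1 \<le> i \<and> i < m0 \<longrightarrow> \<not> P i"
      show "\<forall>i<m0. colon_max n (ideal_pow n ?I i) \<subseteq> ideal_pow n ?I i"
      proof (intro allI impI)
        fix i assume i: "i < m0"
        show "colon_max n (ideal_pow n ?I i) \<subseteq> ideal_pow n ?I i"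
        proof (cases "i = 0")
          case True
          then show ?thesis using colon_sub_0[of n ?I] by simp
        next
          case False
          then have "1 \<le> i" by simp
          then show ?thesis using colon_sub_iff[OF n _ dpos, of i a, where 'k='k] PS[of i] H i by simp
        qed
      qed
    qed
    show ?thesis by (simp only: a1 a2 least[of m0])
  qed
  have S1: "Soc_equigen n ?I \<longleftrightarrow>
    (\<forall>m\<ge>k0. colon_max n (ideal_pow n ?I m) \<subseteq>
           {f + g | f g. f \<in> ideal_prod n (ideal_pow n ?I (m - k0)) (colon_max n (ideal_pow n ?I k0))
                        \<and> g \<in> ideal_pow n ?I m})"
    unfolding Soc_equigen_def by (rule all_eq_one[OF Q1])
  have socz: "soc_ideal n d ?I m = {0} \<longleftrightarrow> \<not> P m" if "1 \<le> m" for m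
  proof -
    have "1 \<le> m * d" using that dpos by (simp add: Suc_le_eq)
    then show ?thesis using MI_eq_zero_iff[OF SocS_inS, of n a d m, where 'k='k] PS[OF that] by (simp add: soc_MI) blast
  qed
  have Q2: "(soc_ideal n d ?I m0 \<noteq> {0} \<and> (\<forall>i. 1 \<le> i \<and> i < m0 \<longrightarrow> soc_ideal n d ?I i = {0})) \<longleftrightarrow> m0 = k0"
    if "1 \<le> m0" for m0
  proof -
    have "(\<forall>i. 1 \<le> i \<and> i < m0 \<longrightarrow> soc_ideal n d ?I i = {0}) \<longleftrightarrow> (\<forall>i. 1 \<le> i \<and> i < m0 \<longrightarrow> \<not> P i)"
    proof (intro iff_allI imp_cong refl)
      fix i assume "1 \<le> i \<and> i < m0"
      then show "soc_ideal n d ?I i = {0} \<longleftrightarrow> \<not> P i" using socz by simp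
    qed
    then show ?thesis by (simp only: socz[OF that] least[of m0] not_not)
  qed
  have S2: "SocStar_equigen n d ?I \<longleftrightarrow>
    (\<forall>m\<ge>k0. soc_ideal n d ?I m \<subseteq> ideal_prod n (ideal_pow n ?I (m - k0)) (soc_ideal n d ?I k0))"
    unfolding SocStar_equigen_def by (rule all_eq_one'[OF Q2 k1])
  have C1: "Soc_equigen n ?I \<longleftrightarrow> (\<forall>A\<subseteq>{..<n}. d < sum a A \<longrightarrow> card A - 1 \<le> k0 * (sum a A - d))"
    using S1 E1_iff[OF n apos dpos k1] by simp
  have C2: "SocStar_equigen n d ?I \<longleftrightarrow> (\<forall>A\<subseteq>{..<n}. d < sum a A \<longrightarrow> card A - 1 \<le> k0 * (sum a A - d))"
    using S2 E2_iff[OF n apos dpos k1] by simp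
  show ?thesis using C1 C2 by simp
qed

end
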